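(* Let $M_k$ be either $M_{E,k}$ for all $k$ (then set $C_\dagger=C_{E,\dagger}$, $\eta=\eta_E$) or $M_{V,k}$ for all $k$ (then set $C_\dagger=C_{V,\dagger}$, $\eta=\eta_V$), and let $R_k=Id_k-M_k^{-1}A_k$. Then for all $k\ge1$ and all $\mathbf{v}\in N_k$, $$a\big((Id_k-I_{k-1}^kP_k^{k-1})\mathbf{v},(Id_k-I_{k-1}^kP_k^{k-1})\mathbf{v}\big)\le\frac{C_\dagger}{\eta}\,a\big((Id_k-R_k)\mathbf{v},\mathbf{v}\big).$$
   Context: Setting: $\Omega\subset\mathbb{R}^3$ bounded convex hexahedral domain with axis-parallel edges, $\alpha>0$ constant, $a(\mathbf{w},\mathbf{v})=\alpha\int_\Omega\nabla\times\mathbf{w}\cdot\nabla\times\mathbf{v}+\int_\Omega\mathbf{w}\cdot\mathbf{v}$. Meshes $\mathcal{T}_k$ of axis-parallel boxes, $\mathcal{T}_k$ the uniform refinement of $\mathcal{T}_{k-1}$; $N_k\subset H_0(\mathbf{curl};\Omega)$ the lowest order Nédélec space on $\mathcal{T}_k$ (piecewise $(a_1+a_2x_2+a_3x_3+a_4x_2x_3,\,b_1+b_2x_3+b_3x_1+b_4x_3x_1,\,c_1+c_2x_1+c_3x_2+c_4x_1x_2)$, degrees of freedom $\lambda_e(\mathbf{v})=\frac1{|e|}\int_e\mathbf{v}\cdot\mathbf{t}_e$ on interior edges); $A_k:N_k\to N_k'$, $\langle A_k\mathbf{w},\mathbf{v}\rangle=a(\mathbf{w},\mathbf{v})$; $Id_k$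 identity on $N_k$; $I_{k-1}^k:N_{k-1}\to N_k$ natural injection; $P_k^{k-1}:N_k\to N_{k-1}$ the Ritz projection $a(P_k^{k-1}\mathbf{w},\mathbf{v})=a(\mathbf{w},I_{k-1}^k\mathbf{v})$. With $\mathcal{T}_h=\mathcal{T}_k$, $\mathcal{T}_H=\mathcal{T}_{k-1}$, $N_h=N_k$: interior spaces $N_h^T=\{\mathbf{v}\in N_h:\mathbf{v}=0\text{ on }\Omega\setminus T\}$ for $T\in\mathcal{T}_H$; for an interior coarse edge $E$, $N_h^E$ is the set of $\mathbf{v}\in N_h$ whose degrees of freedom vanish on all interior fine edges except those lying in the interior of one of the four coarse elements $T_E^i$ containing $E$, those contained in one of the four coarse faces $F_E^j$ containing $E$ but not in $\partial F_E^j$, and those contained in $E$, and which are $a$-orthogonal to $\sum_iN_h^{T_E^i}$; for an interior coarse vertex $V$, $N_h^V$ is defined likewise using the $8$ coarse elements, $12$ coarse faces and $6$ coarse edges containing $V$ (all fine edges contained in these coarse edges allowed), with $a$-orthogonality to the sum of the $8$ interior spaces. For each subspace $S$, $J_S$ is the inclusion, $J_S^t$ its transpose, $A_S$ given by $a$ on $S$. $M_{E,k}^{-1}=\eta_E\big(\sum_{T\in\mathcal{T}_H}J_TA_T^{-1}J_T^t+\sum_{E\in\mathcal{E}_H}J_EA_E^{-1}J_E^t\big)$ with $0<\eta_E\le1/12$, $M_{V,k}^{-1}=\eta_V\big(\sum_TJ_TA_T^{-1}J_T^t+\sum_{V\in\mathcal{V}_H}J_VA_V^{-1}J_V^t\big)$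 with $0<\eta_V\le1/8$ ($\mathcal{E}_H,\mathcal{V}_H$ interior coarse edges/vertices); $M_{E,k},M_{V,k}$ are their inverses. With $P_H:N_h\to N_H$ the $a$-orthogonal projection, $C_{E,\dagger}$ (resp. $C_{V,\dagger}$) is a constant, independent of $\alpha$, $h$ and the number of elements, such that on every level each $\mathbf{w}\in(I-P_H)N_h$ can be written as $\sum_{T}\mathbf{w}_T+\sum_{E\in\mathcal{E}_H}\mathbf{w}_E$ with $\mathbf{w}_T\in N_h^T$, $\mathbf{w}_E\in N_h^E$ and $\sum_Ta(\mathbf{w}_T,\mathbf{w}_T)+\sum_Ea(\mathbf{w}_E,\mathbf{w}_E)\le C_{E,\dagger}a(\mathbf{w},\mathbf{w})$ (resp. with vertex spaces and $C_{V,\dagger}$); such constants exist. *)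

theory Defs
  imports "HOL-Analysis.Analysis"
begin

text \<open>Points of R^3 have type real^3. An axis-parallel box (and, more generally,
  a face of such a box) is represented by the pair (c,d) of its lower and upper corners.\<close>

type_synonym pt = "real^3"
type_synonym bx = "pt \<times> pt"

definition cbx :: "bx \<Rightarrow> pt set" where "cbx T = cbox (fst T) (snd T)"
definition obx :: "bx \<Rightarrow> pt set" where "obx T = box (fst T) (snd T)"

definition nondeg :: "bx \<Rightarrow> bool" where
  "nondeg T \<longleftrightarrow> (\<forall>i. fst T $ i < snd T $ i)"

definition is_face :: "bx \<Rightarrow> bx \<Rightarrow> bool" where
  "is_face T F \<longleftrightarrow> (\<forall>i. (fst F $ i = fst T $ i \<and> snd F $ i = snd T $ i)
                       \<or> (fst F $ i = fst T $ i \<and> snd F $ i = fst T $ i)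
                       \<or> (fst F $ i = snd T $ i \<and> snd F $ i = snd T $ i))"

definition fdim :: "bx \<Rightarrow> nat" where "fdim F = card {i. fst F $ i < snd F $ i}"

definition faces :: "bx set \<Rightarrow> nat \<Rightarrow> bx set" where
  "faces M j = {F. \<exists>T\<in>M. is_face T F \<and> fdim F = j}"

definition box_mesh :: "pt \<Rightarrow> pt \<Rightarrow> bx set \<Rightarrow> bool" where
  "box_mesh lo hi M \<longleftrightarrow> finite M \<and> M \<noteq> {} \<and> (\<forall>T\<in>M. nondeg T) \<and>
     \<Union>(cbx ` M) = cbox lo hi \<and>
     (\<forall>T\<in>M. \<forall>T'\<in>M. T \<noteq> T' \<longrightarrow> obx T \<inter> obx T' = {}) \<and>
     (\<forall>T\<in>M. \<forall>T'\<in>M. cbx T \<inter> cbx T' = {} \<or>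
        (\<exists>F. is_face T F \<and> is_face T' F \<and> cbx T \<inter> cbx T' = cbx F))"

definition refine_box :: "bx \<Rightarrow> bx set" where
  "refine_box T = (let a = fst T; b = snd T; m = (1/2) *\<^sub>R (a + b) in
     {((\<chi> i. if s i then m $ i else a $ i), (\<chi> i. if s i then b $ i else m $ i)) | s :: 3 \<Rightarrow> bool. True})"

definition refine :: "bx set \<Rightarrow> bx set" where "refine M = \<Union>(refine_box ` M)"

definition mesh :: "bx set \<Rightarrow> nat \<Rightarrow> bx set" where "mesh T0 k = (refine ^^ k) T0"

definition int_edges :: "pt \<Rightarrow> pt \<Rightarrow> bx set \<Rightarrow> bx set" where
  "int_edges lo hi M = {E \<in> faces M 1. \<not> cbx E \<subseteq> frontier (box lo hi)}"

definition int_vertices :: "pt \<Rightarrow> pt \<Rightarrow> bx set \<Rightarrow> bx set" where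
  "int_vertices lo hi M = {V \<in> faces M 0. fst V \<in> box lo hi}"

section \<open>Lowest order Nedelec space on a box mesh\<close>

definition ned_poly :: "real^4 \<Rightarrow> real^4 \<Rightarrow> real^4 \<Rightarrow> pt \<Rightarrow> real^3" where
  "ned_poly a b c x = vector
     [a$1 + a$2 * x$2 + a$3 * x$3 + a$4 * x$2 * x$3,
      b$1 + b$2 * x$3 + b$3 * x$1 + b$4 * x$3 * x$1,
      c$1 + c$2 * x$1 + c$3 * x$2 + c$4 * x$1 * x$2]"

definition ned_polys :: "(pt \<Rightarrow> real^3) set" where
  "ned_polys = {ned_poly a b c | a b c. True}"

definition loc :: "(pt \<Rightarrow> real^3) \<Rightarrow> bx \<Rightarrow> pt \<Rightarrow> real^3" where
  "loc v T = (SOME p. p \<in> ned_polys \<and> (\<forall>x\<in>obx T. v x = p x))"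

text \<open>The lowest order Nedelec space N(M) \<subseteq> H_0(curl): piecewise Nedelec polynomials whose
  tangential traces are continuous across interior faces and vanish on boundary faces.
  Elements of H(curl) are a.e.-classes; we fix the representative which vanishes off the
  open elements (i.e. on the mesh skeleton and outside the domain).\<close>
definition ned :: "pt \<Rightarrow> pt \<Rightarrow> bx set \<Rightarrow> (pt \<Rightarrow> real^3) set" where
  "ned lo hi M = {v.
     (\<forall>T\<in>M. \<exists>p\<in>ned_polys. \<forall>x\<in>obx T. v x = p x) \<and>
     (\<forall>x. x \<notin> \<Union>(obx ` M) \<longrightarrow> v x = 0) \<and>
     (\<forall>T\<in>M. \<forall>T'\<in>M. \<forall>F i. is_face T F \<and> is_face T' F \<and> fdim F = 2 \<and> fst F $ i = snd F $ i \<longrightarrow>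
        (\<forall>x\<in>cbx F. \<forall>j. j \<noteq> i \<longrightarrow> loc v T x $ j = loc v T' x $ j)) \<and>
     (\<forall>T\<in>M. \<forall>F i. is_face T F \<and> fdim F = 2 \<and> fst F $ i = snd F $ i \<and> cbx F \<subseteq> frontier (box lo hi) \<longrightarrow>
        (\<forall>x\<in>cbx F. \<forall>j. j \<noteq> i \<longrightarrow> loc v T x $ j = 0))}"

text \<open>Degree of freedom of the edge e = [c,d]: (1/|e|) \<integral>_e v . t_e, with t_e = (d-c)/|d-c|,
  using the (tangentially continuous) trace from an element containing e.\<close>
definition dof :: "bx set \<Rightarrow> (pt \<Rightarrow> real^3) \<Rightarrow> bx \<Rightarrow> real" where
  "dof M v e = (let c = fst e; d = snd e; T = (SOME T. T \<in> M \<and> cbx e \<subseteq> cbx T) in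
     (1 / norm (d - c)) * integral {0..1} (\<lambda>s. loc v T (c + s *\<^sub>R (d - c)) \<bullet> (d - c)))"

section \<open>The bilinear form\<close>

definition pdiff :: "(pt \<Rightarrow> real^3) \<Rightarrow> 3 \<Rightarrow> 3 \<Rightarrow> pt \<Rightarrow> real" where
  "pdiff v i j x = deriv (\<lambda>t. v (x + t *\<^sub>R axis j 1) $ i) 0"

definition curl :: "(pt \<Rightarrow> real^3) \<Rightarrow> pt \<Rightarrow> real^3" where
  "curl v x = vector [pdiff v 3 2 x - pdiff v 2 3 x,
                      pdiff v 1 3 x - pdiff v 3 1 x,
                      pdiff v 2 1 x - pdiff v 1 2 x]"

definition aform :: "real \<Rightarrow> pt \<Rightarrow> pt \<Rightarrow> (pt \<Rightarrow> real^3) \<Rightarrow> (pt \<Rightarrow> real^3) \<Rightarrow> real" where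
  "aform \<alpha> lo hi w v = \<alpha> * integral (box lo hi) (\<lambda>x. curl w x \<bullet> curl v x)
                        + integral (box lo hi) (\<lambda>x. w x \<bullet> v x)"

section \<open>Level operators\<close>

text \<open>A setting: coefficient \<alpha>, domain box lo hi, initial mesh T0.\<close>
type_synonym setting = "real \<times> pt \<times> pt \<times> bx set"

definition Nk :: "setting \<Rightarrow> nat \<Rightarrow> (pt \<Rightarrow> real^3) set" where
  "Nk st k = (case st of (\<alpha>, lo, hi, T0) \<Rightarrow> ned lo hi (mesh T0 k))"

definition ak :: "setting \<Rightarrow> (pt \<Rightarrow> real^3) \<Rightarrow> (pt \<Rightarrow> real^3) \<Rightarrow> real" where
  "ak st = (case st of (\<alpha>, lo, hi, T0) \<Rightarrow> aform \<alpha> lo hi)"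

text \<open>Natural injection I_{k-1}^k (identity up to a null set: re-normalised on the fine skeleton).\<close>
definition Inj :: "setting \<Rightarrow> nat \<Rightarrow> (pt \<Rightarrow> real^3) \<Rightarrow> (pt \<Rightarrow> real^3)" where
  "Inj st k u = (case st of (\<alpha>, lo, hi, T0) \<Rightarrow>
     (\<lambda>x. if x \<in> \<Union>(obx ` mesh T0 k) then u x else 0))"

definition Ritz :: "setting \<Rightarrow> nat \<Rightarrow> (pt \<Rightarrow> real^3) \<Rightarrow> (pt \<Rightarrow> real^3)" where
  "Ritz st k w = (THE u. u \<in> Nk st (k-1) \<and> (\<forall>v\<in>Nk st (k-1). ak st u v = ak st w (Inj st k v)))"

definition Aop :: "setting \<Rightarrow> nat \<Rightarrow> (pt \<Rightarrow> real^3) \<Rightarrow> ((pt \<Rightarrow> real^3) \<Rightarrow> real)" where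
  "Aop st k w = restrict (\<lambda>v. ak st w v) (Nk st k)"

text \<open>J_S^t (restriction of a functional to S), A_S^{-1} and J_S (inclusion, implicit).\<close>
definition Jt :: "(pt \<Rightarrow> real^3) set \<Rightarrow> ((pt \<Rightarrow> real^3) \<Rightarrow> real) \<Rightarrow> ((pt \<Rightarrow> real^3) \<Rightarrow> real)" where
  "Jt S \<phi> = restrict \<phi> S"

definition AinvS :: "setting \<Rightarrow> (pt \<Rightarrow> real^3) set \<Rightarrow> ((pt \<Rightarrow> real^3) \<Rightarrow> real) \<Rightarrow> (pt \<Rightarrow> real^3)" where
  "AinvS st S \<psi> = (THE u. u \<in> S \<and> (\<forall>s\<in>S. ak st u s = \<psi> s))"

text \<open>Interior space N_h^T, T a coarse element (level k-1), h = level k.\<close>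
definition NT :: "setting \<Rightarrow> nat \<Rightarrow> bx \<Rightarrow> (pt \<Rightarrow> real^3) set" where
  "NT st k T = (case st of (\<alpha>, lo, hi, T0) \<Rightarrow>
     {v \<in> Nk st k. \<forall>x\<in>box lo hi - cbx T. v x = 0})"

definition elems_cont :: "setting \<Rightarrow> nat \<Rightarrow> pt set \<Rightarrow> bx set" where
  "elems_cont st k X = (case st of (\<alpha>, lo, hi, T0) \<Rightarrow> {T \<in> mesh T0 (k-1). X \<subseteq> cbx T})"

definition faces_cont :: "setting \<Rightarrow> nat \<Rightarrow> pt set \<Rightarrow> bx set" where
  "faces_cont st k X = (case st of (\<alpha>, lo, hi, T0) \<Rightarrow> {F \<in> faces (mesh T0 (k-1)) 2. X \<subseteq> cbx F})"

definition edges_cont :: "setting \<Rightarrow> nat \<Rightarrow> pt set \<Rightarrow> bx set" where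
  "edges_cont st k X = (case st of (\<alpha>, lo, hi, T0) \<Rightarrow> {E \<in> faces (mesh T0 (k-1)) 1. X \<subseteq> cbx E})"

text \<open>Fine interior edges whose degrees of freedom may be nonzero for a patch around the coarse
  set X (X = a coarse edge E, or a coarse vertex {V}): edges in the interior of a coarse element
  containing X, edges in a coarse face containing X but not in its boundary, edges contained in
  a coarse edge containing X.\<close>
definition allowed :: "setting \<Rightarrow> nat \<Rightarrow> pt set \<Rightarrow> bx set" where
  "allowed st k X = (case st of (\<alpha>, lo, hi, T0) \<Rightarrow>
     {e \<in> int_edges lo hi (mesh T0 k).
        (\<exists>T\<in>elems_cont st k X. open_segment (fst e) (snd e) \<subseteq> obx T) \<or>
        (\<exists>F\<in>faces_cont st k X. cbx e \<subseteq> cbx F \<and> \<not> cbx e \<subseteq> rel_frontier (cbx F)) \<or>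
        (\<exists>E\<in>edges_cont st k X. cbx e \<subseteq> cbx E)})"

definition patch_space :: "setting \<Rightarrow> nat \<Rightarrow> pt set \<Rightarrow> (pt \<Rightarrow> real^3) set" where
  "patch_space st k X = (case st of (\<alpha>, lo, hi, T0) \<Rightarrow>
     {v \<in> Nk st k.
        (\<forall>e \<in> int_edges lo hi (mesh T0 k) - allowed st k X. dof (mesh T0 k) v e = 0) \<and>
        (\<forall>w \<in> {(\<lambda>x. \<Sum>T\<in>elems_cont st k X. wT T x) | wT. \<forall>T\<in>elems_cont st k X. wT T \<in> NT st k T}.
            ak st v w = 0)})"

text \<open>Edge space N_h^E (E a coarse edge) and vertex space N_h^V (V a coarse vertex, stored as (p,p)).\<close>
definition NE :: "setting \<Rightarrow> nat \<Rightarrow> bx \<Rightarrow> (pt \<Rightarrow> real^3) set" where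
  "NE st k E = patch_space st k (cbx E)"

definition NV :: "setting \<Rightarrow> nat \<Rightarrow> bx \<Rightarrow> (pt \<Rightarrow> real^3) set" where
  "NV st k V = patch_space st k {fst V}"

datatype variant = EdgeVar | VertexVar

definition patches :: "variant \<Rightarrow> setting \<Rightarrow> nat \<Rightarrow> bx set" where
  "patches var st k = (case st of (\<alpha>, lo, hi, T0) \<Rightarrow>
     (case var of EdgeVar \<Rightarrow> int_edges lo hi (mesh T0 (k-1))
                | VertexVar \<Rightarrow> int_vertices lo hi (mesh T0 (k-1))))"

definition NP :: "variant \<Rightarrow> setting \<Rightarrow> nat \<Rightarrow> bx \<Rightarrow> (pt \<Rightarrow> real^3) set" where
  "NP var st k P = (case var of EdgeVar \<Rightarrow> NE st k P | VertexVar \<Rightarrow> NV st k P)"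

definition eta_max :: "variant \<Rightarrow> real" where
  "eta_max var = (case var of EdgeVar \<Rightarrow> 1/12 | VertexVar \<Rightarrow> 1/8)"

definition Minv :: "variant \<Rightarrow> real \<Rightarrow> setting \<Rightarrow> nat \<Rightarrow> ((pt \<Rightarrow> real^3) \<Rightarrow> real) \<Rightarrow> (pt \<Rightarrow> real^3)" where
  "Minv var \<eta> st k \<phi> = (case st of (\<alpha>, lo, hi, T0) \<Rightarrow>
     (\<lambda>x. \<eta> *\<^sub>R ((\<Sum>T\<in>mesh T0 (k-1). AinvS st (NT st k T) (Jt (NT st k T) \<phi>) x)
                + (\<Sum>P\<in>patches var st k. AinvS st (NP var st k P) (Jt (NP var st k P) \<phi>) x))))"

definition Rk :: "variant \<Rightarrow> real \<Rightarrow> setting \<Rightarrow> nat \<Rightarrow> (pt \<Rightarrow> real^3) \<Rightarrow> (pt \<Rightarrow> real^3)" where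
  "Rk var \<eta> st k v = (\<lambda>x. v x - Minv var \<eta> st k (Aop st k v) x)"

definition stable_decomp :: "variant \<Rightarrow> setting \<Rightarrow> real \<Rightarrow> bool" where
  "stable_decomp var st C \<longleftrightarrow> (case st of (\<alpha>, lo, hi, T0) \<Rightarrow>
     (\<forall>k\<ge>1. \<forall>w \<in> {(\<lambda>x. v x - Inj st k (Ritz st k v) x) | v. v \<in> Nk st k}.
        \<exists>wT wP. (\<forall>T\<in>mesh T0 (k-1). wT T \<in> NT st k T) \<and>
                (\<forall>P\<in>patches var st k. wP P \<in> NP var st k P) \<and>
                w = (\<lambda>x. (\<Sum>T\<in>mesh T0 (k-1). wT T x) + (\<Sum>P\<in>patches var st k. wP P x)) \<and>
                (\<Sum>T\<in>mesh T0 (k-1). ak st (wT T) (wT T)) + (\<Sum>P\<in>patches var st k. ak st (wP P) (wP P))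
                  \<le> C * ak st w w))"

end

theory Submission
  imports Defs "HOL-Library.Function_Algebras"
begin

type_synonym vf = "pt \<Rightarrow> real^3"

lemma cases3: fixes i :: 3 obtains "i = 1" | "i = 2" | "i = 3"
  using exhaust_3 by blast

lemma distinct3: "(1::3) \<noteq> 2" "(1::3) \<noteq> 3" "(2::3) \<noteq> 3" "(2::3) \<noteq> 1" "(3::3) \<noteq> 1" "(3::3) \<noteq> 2"
  by simp_all

lemma ned_poly_comp:
  "ned_poly a b c x $ 1 = a$1 + a$2 * x$2 + a$3 * x$3 + a$4 * x$2 * x$3"
  "ned_poly a b c x $ 2 = b$1 + b$2 * x$3 + b$3 * x$1 + b$4 * x$3 * x$1"
  "ned_poly a b c x $ 3 = c$1 + c$2 * x$1 + c$3 * x$2 + c$4 * x$1 * x$2"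
  by (simp_all add: ned_poly_def)

lemma ned_poly_add: "ned_poly a b c x + ned_poly a' b' c' x = ned_poly (a+a') (b+b') (c+c') x"
  by (simp add: vec_eq_iff forall_3 ned_poly_comp algebra_simps)

lemma ned_poly_scale: "r *\<^sub>R ned_poly a b c x = ned_poly (r*\<^sub>R a) (r*\<^sub>R b) (r*\<^sub>R c) x"
  by (simp add: vec_eq_iff forall_3 ned_poly_comp algebra_simps)

lemma ned_poly_zero: "ned_poly 0 0 0 x = 0"
  by (simp add: vec_eq_iff forall_3 ned_poly_comp)

lemma ned_polys_add: "p \<in> ned_polys \<Longrightarrow> q \<in> ned_polys \<Longrightarrow> (\<lambda>x. p x + q x) \<in> ned_polys"
  unfolding ned_polys_def by (auto simp: ned_poly_add) blast

lemma ned_polys_scale: "p \<in> ned_polys \<Longrightarrow> (\<lambda>x. r *\<^sub>R p x) \<in> ned_polys"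
  unfolding ned_polys_def by (auto simp: ned_poly_scale) blast

lemma ned_polys_zero: "(\<lambda>x. 0) \<in> ned_polys"
  unfolding ned_polys_def using ned_poly_zero by (auto intro!: exI[of _ 0])

lemma ned_polys_diff: "p \<in> ned_polys \<Longrightarrow> q \<in> ned_polys \<Longrightarrow> (\<lambda>x. p x - q x) \<in> ned_polys"
  using ned_polys_add[of p "\<lambda>x. (-1) *\<^sub>R q x"] ned_polys_scale[of q "-1"] by simp

lemma cont_comp3: "continuous_on UNIV (\<lambda>x::real^3. x $ i)"
  by (intro continuous_intros)

lemma ned_poly_cont: "continuous_on UNIV (ned_poly a b c)"
proof -
  have e: "ned_poly a b c = (\<lambda>x. \<chi> i. ned_poly a b c x $ i)" by simp
  show ?thesis
    apply (subst e)
    apply (rule continuous_on_vec_lambda)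
    subgoal for i by (cases i rule: cases3) (simp_all add: ned_poly_comp; intro continuous_intros)+
    done
qed

lemma ned_polys_cont: "p \<in> ned_polys \<Longrightarrow> continuous_on UNIV p"
  unfolding ned_polys_def using ned_poly_cont by auto

lemma axis3: "(axis j (1::real) :: real^3) $ i = (if i = j then 1 else 0)"
  by (simp add: axis_def)

lemma ned_poly_line:
  "ned_poly a b c (x + t *\<^sub>R axis j 1) $ i = ned_poly a b c x $ i + t * (ned_poly a b c (x + axis j 1) $ i - ned_poly a b c x $ i)"
  by (cases i rule: cases3; cases j rule: cases3) (simp_all add: ned_poly_comp axis3 algebra_simps)

lemma ned_polys_line:
  "p \<in> ned_polys \<Longrightarrow> p (x + t *\<^sub>R axis j 1) $ i = p x $ i + t * (p (x + axis j 1) $ i - p x $ i)"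
  unfolding ned_polys_def using ned_poly_line by auto

definition pd :: "vf \<Rightarrow> 3 \<Rightarrow> 3 \<Rightarrow> pt \<Rightarrow> real" where
  "pd p i j x = p (x + axis j 1) $ i - p x $ i"

definition curlp :: "vf \<Rightarrow> pt \<Rightarrow> real^3" where
  "curlp p x = vector [pd p 3 2 x - pd p 2 3 x, pd p 1 3 x - pd p 3 1 x, pd p 2 1 x - pd p 1 2 x]"

lemma pdiff_local:
  assumes p: "p \<in> ned_polys" and e: "e > 0" and u: "\<forall>y\<in>ball x e. u y = p y"
  shows "pdiff u i j x = pd p i j x"
proof -
  have d: "((\<lambda>t. p x $ i + t * pd p i j x) has_field_derivative pd p i j x) (at 0)"
    by (auto intro!: derivative_eq_intros)
  have "((\<lambda>t. u (x + t *\<^sub>R axis j 1) $ i) has_field_derivative pd p i j x) (at 0)"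
  proof (rule has_field_derivative_transform_within_open[OF d, of "ball 0 e"])
    fix t :: real assume "t \<in> ball 0 e"
    then have "x + t *\<^sub>R axis j 1 \<in> ball x e" by (simp add: dist_norm)
    then show "p x $ i + t * pd p i j x = u (x + t *\<^sub>R axis j 1) $ i"
      using u ned_polys_line[OF p] unfolding pd_def by simp
  qed (use e in auto)
  then show ?thesis unfolding pdiff_def by (rule DERIV_imp_deriv)
qed

lemma curl_local:
  assumes "p \<in> ned_polys" "e > 0" "\<forall>y\<in>ball x e. u y = p y"
  shows "curl u x = curlp p x"
  unfolding curl_def curlp_def using pdiff_local[OF assms] by simp

lemma pd_add: "pd (\<lambda>x. p x + q x) i j x = pd p i j x + pd q i j x"
  by (simp add: pd_def)
lemma pd_scale: "pd (\<lambda>x. r *\<^sub>R p x) i j x = r * pd p i j x"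
  by (simp add: pd_def algebra_simps)
lemma curlp_add: "curlp (\<lambda>x. p x + q x) x = curlp p x + curlp q x"
  by (simp add: curlp_def pd_add vec_eq_iff forall_3)
lemma curlp_scale: "curlp (\<lambda>x. r *\<^sub>R p x) x = r *\<^sub>R curlp p x"
  by (simp add: curlp_def pd_scale vec_eq_iff forall_3 algebra_simps)
lemma curlp_zero: "curlp (\<lambda>x. 0) x = 0"
  by (simp add: curlp_def pd_def vec_eq_iff forall_3)

lemma pd_cont: "p \<in> ned_polys \<Longrightarrow> continuous_on UNIV (pd p i j)"
proof -
  assume p: "p \<in> ned_polys"
  have c: "continuous_on UNIV p" by (rule ned_polys_cont[OF p])
  have "continuous_on UNIV (\<lambda>x. p (x + axis j 1))"
    by (rule continuous_on_compose2[OF c]) (auto intro: continuous_intros)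
  then have "continuous_on UNIV (\<lambda>x. p (x + axis j 1) $ i)" by (rule continuous_on_component)
  moreover have "continuous_on UNIV (\<lambda>x. p x $ i)" using c by (rule continuous_on_component)
  ultimately show ?thesis unfolding pd_def by (intro continuous_on_diff)
qed

lemma curlp_cont: "p \<in> ned_polys \<Longrightarrow> continuous_on UNIV (curlp p)"
proof -
  assume p: "p \<in> ned_polys"
  have e: "curlp p = (\<lambda>x. \<chi> i. curlp p x $ i)" by simp
  show ?thesis
    apply (subst e)
    apply (rule continuous_on_vec_lambda)
    subgoal for i
      apply (cases i rule: cases3)
        apply (simp_all add: curlp_def)
        apply (intro continuous_on_diff pd_cont p)+
      done
    done
qed

section \<open>Good meshes and piecewise polynomial fields\<close>

definition gmesh :: "pt \<Rightarrow> pt \<Rightarrow> bx set \<Rightarrow> bool" where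
  "gmesh lo hi M \<longleftrightarrow> finite M \<and> (\<forall>T\<in>M. nondeg T) \<and> (\<forall>T\<in>M. obx T \<subseteq> box lo hi) \<and>
     (\<forall>T\<in>M. \<forall>T'\<in>M. T \<noteq> T' \<longrightarrow> obx T \<inter> obx T' = {})"

definition PP :: "bx set \<Rightarrow> vf \<Rightarrow> bool" where
  "PP M u \<longleftrightarrow> (\<forall>T\<in>M. \<exists>p\<in>ned_polys. \<forall>x\<in>obx T. u x = p x) \<and> (\<forall>x. x \<notin> \<Union>(obx ` M) \<longrightarrow> u x = 0)"

definition skel :: "bx set \<Rightarrow> pt set" where
  "skel M = (\<Union>T\<in>M. cbx T - obx T)"

lemma negligible_skel: "finite M \<Longrightarrow> negligible (skel M)"
  unfolding skel_def cbx_def obx_def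
  by (intro negligible_Union) (auto intro: negligible_frontier_interval)

lemma obx_open: "open (obx T)" by (simp add: obx_def open_box)
lemma cbx_closed: "closed (cbx T)" by (simp add: cbx_def closed_cbox)
lemma obx_cbx: "obx T \<subseteq> cbx T" by (simp add: obx_def cbx_def box_subset_cbox)

lemma nondeg_ne: "nondeg T \<Longrightarrow> obx T \<noteq> {}"
proof -
  assume "nondeg T"
  then have "(1/2) *\<^sub>R (fst T + snd T) \<in> obx T"
    unfolding nondeg_def obx_def by (auto simp: mem_box_cart)
  then show ?thesis by blast
qed

lemma PP_local:
  assumes M: "finite M" and u: "PP M u" and x: "x \<notin> skel M"
  shows "\<exists>p\<in>ned_polys. \<exists>e>0. \<forall>y\<in>ball x e. u y = p y"
proof (cases "\<exists>T\<in>M. x \<in> obx T")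
  case True
  then obtain T where T: "T \<in> M" "x \<in> obx T" by blast
  from u T(1) obtain p where p: "p \<in> ned_polys" "\<forall>y\<in>obx T. u y = p y" unfolding PP_def by blast
  from obx_open[of T] T(2) obtain e where e: "e > 0" "ball x e \<subseteq> obx T" by (rule openE)
  have "\<forall>y\<in>ball x e. u y = p y" using e(2) p(2) by blast
  with p(1) e(1) show ?thesis by blast
next
  case False
  with x have nx: "x \<notin> (\<Union>T\<in>M. cbx T)" unfolding skel_def by blast
  have "open (- (\<Union>T\<in>M. cbx T))" using M cbx_closed by (intro open_Compl closed_UN) auto
  moreover have "x \<in> - (\<Union>T\<in>M. cbx T)" using nx by simp
  ultimately obtain e where e: "e > 0" "ball x e \<subseteq> - (\<Union>T\<in>M. cbx T)" by (rule openE)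
  have "\<forall>y\<in>ball x e. u y = 0"
  proof
    fix y assume "y \<in> ball x e"
    with e(2) have "y \<notin> (\<Union>T\<in>M. cbx T)" by auto
    then have "y \<notin> \<Union>(obx ` M)" using obx_cbx by blast
    with u show "u y = 0" unfolding PP_def by blast
  qed
  then have "\<forall>y\<in>ball x e. u y = (\<lambda>x. 0) y" by simp
  with e(1) ned_polys_zero show ?thesis by (intro bexI[of _ "\<lambda>x. 0"]) auto
qed



lemma gmeshD:
  assumes "gmesh lo hi M"
  shows "finite M" "\<And>T. T \<in> M \<Longrightarrow> nondeg T" "\<And>T. T \<in> M \<Longrightarrow> obx T \<subseteq> box lo hi"
    "\<And>T T'. T \<in> M \<Longrightarrow> T' \<in> M \<Longrightarrow> T \<noteq> T' \<Longrightarrow> obx T \<inter> obx T' = {}"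
  using assms unfolding gmesh_def by auto

lemma pw_int:
  fixes f :: "pt \<Rightarrow> real"
  assumes gm: "gmesh lo hi M"
    and G: "\<forall>T\<in>M. continuous_on UNIV (G T) \<and> (\<forall>x\<in>obx T. f x = G T x)"
    and z: "\<forall>x. x \<notin> (\<Union>T\<in>M. cbx T) \<longrightarrow> f x = 0"
  shows "(f has_integral (\<Sum>T\<in>M. integral (obx T) (G T))) (box lo hi)"
proof -
  note fin = gmeshD(1)[OF gm]
  define g where "g x = (\<Sum>T\<in>M. if x \<in> obx T then G T x else 0)" for x
  have each: "((\<lambda>x. if x \<in> obx T then G T x else 0) has_integral integral (obx T) (G T)) (box lo hi)"
    if T: "T \<in> M" for T
  proof -
    have oi: "obx T \<inter> box lo hi = obx T" using gmeshD(3)[OF gm T] by blast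
    have "G T integrable_on cbox (fst T) (snd T)"
      using G T by (intro integrable_continuous) (auto intro: continuous_on_subset)
    then have gi: "G T integrable_on obx T" unfolding obx_def by (simp add: integrable_on_open_interval)
    have "(\<lambda>x. if x \<in> obx T then G T x else 0) integrable_on box lo hi"
      using gi oi by (simp add: integrable_restrict_Int)
    moreover have "integral (box lo hi) (\<lambda>x. if x \<in> obx T then G T x else 0) = integral (obx T) (G T)"
      using oi by (simp add: integral_restrict_Int)
    ultimately show ?thesis by (metis has_integral_integrable_integral)
  qed
  have gi: "(g has_integral (\<Sum>T\<in>M. integral (obx T) (G T))) (box lo hi)"
    unfolding g_def by (rule has_integral_sum[OF fin each])
  show ?thesis
  proof (rule has_integral_spike[OF negligible_skel[OF fin] _ gi])
    fix x assume x: "x \<in> box lo hi - skel M"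
    show "f x = g x"
    proof (cases "\<exists>T\<in>M. x \<in> obx T")
      case True
      then obtain T where T: "T \<in> M" "x \<in> obx T" by blast
      have "g x = (\<Sum>T'\<in>M. if T' = T then G T x else 0)"
        unfolding g_def
      proof (rule sum.cong[OF refl])
        fix T' assume T': "T' \<in> M"
        show "(if x \<in> obx T' then G T' x else 0) = (if T' = T then G T x else 0)"
          using gmeshD(4)[OF gm T' T(1)] T by auto
      qed
      also have "\<dots> = G T x" using T(1) fin by simp
      also have "\<dots> = f x" using G T by auto
      finally show ?thesis by simp
    next
      case False
      then have "g x = 0" unfolding g_def by (auto intro: sum.neutral)
      moreover have "x \<notin> (\<Union>T\<in>M. cbx T)" using False x unfolding skel_def by blast
      ultimately show ?thesis using z by simp
    qed
  qed
qed

lemma pw_zero: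
  fixes f :: "pt \<Rightarrow> real"
  assumes gm: "gmesh lo hi M"
    and G: "\<forall>T\<in>M. continuous_on UNIV (G T) \<and> (\<forall>x\<in>obx T. f x = G T x)"
    and z: "\<forall>x. x \<notin> (\<Union>T\<in>M. cbx T) \<longrightarrow> f x = 0"
    and nn: "\<forall>T\<in>M. \<forall>x. 0 \<le> G T x"
    and i0: "integral (box lo hi) f = 0"
    and T: "T \<in> M" and x: "x \<in> obx T"
  shows "G T x = 0"
proof -
  note fin = gmeshD(1)[OF gm]
  have "(\<Sum>T\<in>M. integral (obx T) (G T)) = 0"
    using pw_int[OF gm G z] i0 by (metis integral_unique)
  moreover have nn2: "\<forall>T\<in>M. 0 \<le> integral (obx T) (G T)"
  proof
    fix T assume T: "T \<in> M"
    have "G T integrable_on cbox (fst T) (snd T)"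
      using G T by (intro integrable_continuous) (auto intro: continuous_on_subset)
    then have gi: "G T integrable_on obx T" unfolding obx_def by (simp add: integrable_on_open_interval)
    show "0 \<le> integral (obx T) (G T)" using nn T by (intro integral_nonneg[OF gi]) auto
  qed
  ultimately have "integral (obx T) (G T) = 0" using fin T by (simp add: sum_nonneg_eq_0_iff)
  then have i: "integral (cbox (fst T) (snd T)) (G T) = 0" unfolding obx_def by (simp add: integral_open_interval)
  have gi: "G T integrable_on cbox (fst T) (snd T)"
    using G T by (intro integrable_continuous) (auto intro: continuous_on_subset)
  have "(G T has_integral 0) (cbox (fst T) (snd T))" using gi i by (metis has_integral_integrable_integral)
  moreover have "continuous_on (cbox (fst T) (snd T)) (G T)" using G T by (auto intro: continuous_on_subset)
  moreover have "box (fst T) (snd T) \<noteq> {}" using nondeg_ne[OF gmeshD(2)[OF gm T]] by (simp add: obx_def)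
  moreover have "x \<in> cbox (fst T) (snd T)" using x box_subset_cbox by (auto simp: obx_def)
  ultimately show ?thesis using has_integral_0_cbox_imp_0[of "fst T" "snd T" "G T" x] nn T by blast
qed



lemma PP_add: "PP M u \<Longrightarrow> PP M w \<Longrightarrow> PP M (\<lambda>x. u x + w x)"
  unfolding PP_def
proof (intro conjI ballI allI impI; (elim conjE)?)
  fix T assume u1: "\<forall>T\<in>M. \<exists>p\<in>ned_polys. \<forall>x\<in>obx T. u x = p x"
    and w1: "\<forall>T\<in>M. \<exists>p\<in>ned_polys. \<forall>x\<in>obx T. w x = p x" and T: "T \<in> M"
  from u1 T obtain p where p: "p \<in> ned_polys" "\<forall>x\<in>obx T. u x = p x" by blast
  from w1 T obtain q where q: "q \<in> ned_polys" "\<forall>x\<in>obx T. w x = q x" by blast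
  show "\<exists>p\<in>ned_polys. \<forall>x\<in>obx T. u x + w x = p x"
    using p q ned_polys_add[OF p(1) q(1)] by (intro bexI[of _ "\<lambda>x. p x + q x"]) auto
qed auto

lemma PP_scale: "PP M u \<Longrightarrow> PP M (\<lambda>x. r *\<^sub>R u x)"
  unfolding PP_def
proof (intro conjI ballI allI impI; (elim conjE)?)
  fix T assume u1: "\<forall>T\<in>M. \<exists>p\<in>ned_polys. \<forall>x\<in>obx T. u x = p x" and T: "T \<in> M"
  from u1 T obtain p where p: "p \<in> ned_polys" "\<forall>x\<in>obx T. u x = p x" by blast
  show "\<exists>p\<in>ned_polys. \<forall>x\<in>obx T. r *\<^sub>R u x = p x"
    using p ned_polys_scale[OF p(1)] by (intro bexI[of _ "\<lambda>x. r *\<^sub>R p x"]) auto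
qed auto

lemma PP_zero: "PP M (\<lambda>x. 0)"
  unfolding PP_def using ned_polys_zero by (auto intro!: bexI[of _ "\<lambda>x. 0"])

lemma PP_diff: "PP M u \<Longrightarrow> PP M w \<Longrightarrow> PP M (\<lambda>x. u x - w x)"
  using PP_add[of M u "\<lambda>x. (-1) *\<^sub>R w x"] PP_scale[of M w "-1"] by simp

lemma PP_sum: "(\<And>i. i \<in> I \<Longrightarrow> PP M (f i)) \<Longrightarrow> PP M (\<lambda>x. \<Sum>i\<in>I. f i x)"
proof (induction I rule: infinite_finite_induct)
  case (infinite A) then show ?case using PP_zero by simp
next
  case empty then show ?case using PP_zero by simp
next
  case (insert a A)
  then show ?case using PP_add[of M "f a" "\<lambda>x. \<Sum>i\<in>A. f i x"] by simp
qed

lemma PP_obx: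
  assumes u: "PP M u" and T: "T \<in> M"
  shows "\<exists>p\<in>ned_polys. \<forall>x\<in>obx T. u x = p x \<and> curl u x = curlp p x"
proof -
  from u T obtain p where p: "p \<in> ned_polys" "\<forall>x\<in>obx T. u x = p x" unfolding PP_def by blast
  have "curl u x = curlp p x" if x: "x \<in> obx T" for x
  proof -
    from obx_open[of T] x obtain e where e: "e > 0" "ball x e \<subseteq> obx T" by (rule openE)
    have "\<forall>y\<in>ball x e. u y = p y" using e(2) p(2) by blast
    then show ?thesis by (rule curl_local[OF p(1) e(1)])
  qed
  with p show ?thesis by blast
qed

lemma PP_out:
  assumes M: "finite M" and u: "PP M u" and x: "x \<notin> (\<Union>T\<in>M. cbx T)"
  shows "u x = 0 \<and> curl u x = 0"
proof -
  have "open (- (\<Union>T\<in>M. cbx T))" using M cbx_closed by (intro open_Compl closed_UN) auto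
  moreover have "x \<in> - (\<Union>T\<in>M. cbx T)" using x by simp
  ultimately obtain e where e: "e > 0" "ball x e \<subseteq> - (\<Union>T\<in>M. cbx T)" by (rule openE)
  have z: "\<forall>y\<in>ball x e. u y = 0"
  proof
    fix y assume "y \<in> ball x e"
    with e(2) have "y \<notin> (\<Union>T\<in>M. cbx T)" by auto
    then have "y \<notin> \<Union>(obx ` M)" using obx_cbx by blast
    with u show "u y = 0" unfolding PP_def by blast
  qed
  then have "\<forall>y\<in>ball x e. u y = (\<lambda>x. 0) y" by simp
  from curl_local[OF ned_polys_zero e(1) this] have "curl u x = 0" by (simp add: curlp_zero)
  with z e(1) show ?thesis by simp
qed

lemma curl_lin:
  assumes M: "finite M" and u: "PP M u" and w: "PP M w" and x: "x \<notin> skel M"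
  shows "curl (\<lambda>y. u y + w y) x = curl u x + curl w x"
proof -
  obtain p e1 where p: "p \<in> ned_polys" "e1 > 0" "\<forall>y\<in>ball x e1. u y = p y" using PP_local[OF M u x] by blast
  obtain q e2 where q: "q \<in> ned_polys" "e2 > 0" "\<forall>y\<in>ball x e2. w y = q y" using PP_local[OF M w x] by blast
  define e where "e = min e1 e2"
  have e: "e > 0" using p q by (simp add: e_def)
  have "\<forall>y\<in>ball x e. u y + w y = p y + q y" using p(3) q(3) by (auto simp: e_def)
  then have "curl (\<lambda>y. u y + w y) x = curlp (\<lambda>y. p y + q y) x"
    by (intro curl_local[OF ned_polys_add[OF p(1) q(1)] e]) simp
  also have "\<dots> = curlp p x + curlp q x" by (rule curlp_add)
  also have "curlp p x = curl u x" using curl_local[OF p(1) p(2) p(3)] by simp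
  also have "curlp q x = curl w x" using curl_local[OF q(1) q(2) q(3)] by simp
  finally show ?thesis .
qed

lemma curl_scale:
  assumes M: "finite M" and u: "PP M u" and x: "x \<notin> skel M"
  shows "curl (\<lambda>y. r *\<^sub>R u y) x = r *\<^sub>R curl u x"
proof -
  obtain p e where p: "p \<in> ned_polys" "e > 0" "\<forall>y\<in>ball x e. u y = p y" using PP_local[OF M u x] by blast
  have "\<forall>y\<in>ball x e. r *\<^sub>R u y = r *\<^sub>R p y" using p(3) by auto
  then have "curl (\<lambda>y. r *\<^sub>R u y) x = curlp (\<lambda>y. r *\<^sub>R p y) x"
    by (intro curl_local[OF ned_polys_scale[OF p(1)] p(2)]) simp
  also have "\<dots> = r *\<^sub>R curlp p x" by (rule curlp_scale)
  also have "curlp p x = curl u x" using curl_local[OF p(1) p(2) p(3)] by simp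
  finally show ?thesis .
qed

lemma PP_choice:
  assumes "PP M u"
  obtains P where "\<forall>T\<in>M. P T \<in> ned_polys \<and> (\<forall>x\<in>obx T. u x = P T x \<and> curl u x = curlp (P T) x)"
  using PP_obx[OF assms] by metis

lemma aform_int:
  assumes gm: "gmesh lo hi M" and u: "PP M u" and w: "PP M w"
  shows "(\<lambda>x. u x \<bullet> w x) integrable_on box lo hi" "(\<lambda>x. curl u x \<bullet> curl w x) integrable_on box lo hi"
proof -
  note fin = gmeshD(1)[OF gm]
  obtain P where P: "\<forall>T\<in>M. P T \<in> ned_polys \<and> (\<forall>x\<in>obx T. u x = P T x \<and> curl u x = curlp (P T) x)"
    using PP_choice[OF u] by blast
  obtain Q where Q: "\<forall>T\<in>M. Q T \<in> ned_polys \<and> (\<forall>x\<in>obx T. w x = Q T x \<and> curl w x = curlp (Q T) x)"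
    using PP_choice[OF w] by blast
  have "\<forall>T\<in>M. continuous_on UNIV (\<lambda>x. P T x \<bullet> Q T x) \<and> (\<forall>x\<in>obx T. u x \<bullet> w x = P T x \<bullet> Q T x)"
    using P Q by (auto intro!: continuous_on_inner ned_polys_cont)
  moreover have "\<forall>x. x \<notin> (\<Union>T\<in>M. cbx T) \<longrightarrow> u x \<bullet> w x = 0" using PP_out[OF fin u] by auto
  ultimately show "(\<lambda>x. u x \<bullet> w x) integrable_on box lo hi"
    using pw_int[OF gm, where G="\<lambda>T x. P T x \<bullet> Q T x" and f="\<lambda>x. u x \<bullet> w x"] unfolding integrable_on_def by blast
  have "\<forall>T\<in>M. continuous_on UNIV (\<lambda>x. curlp (P T) x \<bullet> curlp (Q T) x) \<and> (\<forall>x\<in>obx T. curl u x \<bullet> curl w x = curlp (P T) x \<bullet> curlp (Q T) x)"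
    using P Q by (auto intro!: continuous_on_inner curlp_cont)
  moreover have "\<forall>x. x \<notin> (\<Union>T\<in>M. cbx T) \<longrightarrow> curl u x \<bullet> curl w x = 0" using PP_out[OF fin u] by auto
  ultimately show "(\<lambda>x. curl u x \<bullet> curl w x) integrable_on box lo hi"
    using pw_int[OF gm, where G="\<lambda>T x. curlp (P T) x \<bullet> curlp (Q T) x" and f="\<lambda>x. curl u x \<bullet> curl w x"] unfolding integrable_on_def by blast
qed

lemma aform_add:
  assumes gm: "gmesh lo hi M" and u: "PP M u" and w: "PP M w" and z: "PP M z"
  shows "aform \<alpha> lo hi (\<lambda>x. u x + w x) z = aform \<alpha> lo hi u z + aform \<alpha> lo hi w z"
proof -
  note fin = gmeshD(1)[OF gm]
  have "integral (box lo hi) (\<lambda>x. curl (\<lambda>y. u y + w y) x \<bullet> curl z x)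
      = integral (box lo hi) (\<lambda>x. curl u x \<bullet> curl z x + curl w x \<bullet> curl z x)"
    by (rule integral_spike[OF negligible_skel[OF fin]]) (simp add: curl_lin[OF fin u w] inner_add_left)
  also have "\<dots> = integral (box lo hi) (\<lambda>x. curl u x \<bullet> curl z x) + integral (box lo hi) (\<lambda>x. curl w x \<bullet> curl z x)"
    by (rule integral_add; rule aform_int[OF gm]; fact)
  finally have 1: "integral (box lo hi) (\<lambda>x. curl (\<lambda>y. u y + w y) x \<bullet> curl z x) = integral (box lo hi) (\<lambda>x. curl u x \<bullet> curl z x) + integral (box lo hi) (\<lambda>x. curl w x \<bullet> curl z x)" .
  have "integral (box lo hi) (\<lambda>x. (u x + w x) \<bullet> z x) = integral (box lo hi) (\<lambda>x. u x \<bullet> z x + w x \<bullet> z x)"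
    by (simp add: inner_add_left)
  also have "\<dots> = integral (box lo hi) (\<lambda>x. u x \<bullet> z x) + integral (box lo hi) (\<lambda>x. w x \<bullet> z x)"
    by (rule integral_add; rule aform_int[OF gm]; fact)
  finally have 2: "integral (box lo hi) (\<lambda>x. (u x + w x) \<bullet> z x) = integral (box lo hi) (\<lambda>x. u x \<bullet> z x) + integral (box lo hi) (\<lambda>x. w x \<bullet> z x)" .
  show ?thesis unfolding aform_def 1 2 by (simp add: algebra_simps)
qed

lemma aform_scale:
  assumes gm: "gmesh lo hi M" and u: "PP M u" and z: "PP M z"
  shows "aform \<alpha> lo hi (\<lambda>x. r *\<^sub>R u x) z = r * aform \<alpha> lo hi u z"
proof -
  note fin = gmeshD(1)[OF gm]
  have 1: "integral (box lo hi) (\<lambda>x. curl (\<lambda>y. r *\<^sub>R u y) x \<bullet> curl z x)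
      = integral (box lo hi) (\<lambda>x. r * (curl u x \<bullet> curl z x))"
    by (rule integral_spike[OF negligible_skel[OF fin]]) (simp add: curl_scale[OF fin u])
  show ?thesis unfolding aform_def 1 by (simp add: algebra_simps)
qed

lemma aform_sym: "aform \<alpha> lo hi u w = aform \<alpha> lo hi w u"
  by (simp add: aform_def inner_commute)

lemma aform_nonneg_parts:
  assumes gm: "gmesh lo hi M" and u: "PP M u"
  shows "0 \<le> integral (box lo hi) (\<lambda>x. curl u x \<bullet> curl u x)" "0 \<le> integral (box lo hi) (\<lambda>x. u x \<bullet> u x)"
  by (rule integral_nonneg[OF aform_int(2)[OF gm u u]]; simp)
     (rule integral_nonneg[OF aform_int(1)[OF gm u u]]; simp)

lemma aform_nonneg:
  assumes "0 \<le> \<alpha>" and gm: "gmesh lo hi M" and u: "PP M u"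
  shows "0 \<le> aform \<alpha> lo hi u u"
  using aform_nonneg_parts[OF gm u] assms(1) unfolding aform_def by simp

lemma aform_def0:
  assumes a: "0 \<le> \<alpha>" and gm: "gmesh lo hi M" and u: "PP M u" and z: "aform \<alpha> lo hi u u = 0"
  shows "u x = 0"
proof -
  note fin = gmeshD(1)[OF gm]
  have i0: "integral (box lo hi) (\<lambda>x. u x \<bullet> u x) = 0"
    using aform_nonneg_parts[OF gm u] a z unfolding aform_def
    by (smt (verit) mult_nonneg_nonneg)
  obtain P where P: "\<forall>T\<in>M. P T \<in> ned_polys \<and> (\<forall>x\<in>obx T. u x = P T x \<and> curl u x = curlp (P T) x)"
    using PP_choice[OF u] by blast
  have G: "\<forall>T\<in>M. continuous_on UNIV (\<lambda>x. P T x \<bullet> P T x) \<and> (\<forall>x\<in>obx T. u x \<bullet> u x = P T x \<bullet> P T x)"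
    using P by (auto intro!: continuous_on_inner ned_polys_cont)
  have zz: "\<forall>x. x \<notin> (\<Union>T\<in>M. cbx T) \<longrightarrow> u x \<bullet> u x = 0" using PP_out[OF fin u] by auto
  show ?thesis
  proof (cases "\<exists>T\<in>M. x \<in> obx T")
    case True
    then obtain T where T: "T \<in> M" "x \<in> obx T" by blast
    have "P T x \<bullet> P T x = 0"
      by (rule pw_zero[OF gm, where G="\<lambda>T x. P T x \<bullet> P T x" and f="\<lambda>x. u x \<bullet> u x", OF G zz _ i0 T]) simp
    then show ?thesis using P T by simp
  next
    case False then show ?thesis using u unfolding PP_def by blast
  qed
qed



definition child :: "bx \<Rightarrow> (3 \<Rightarrow> bool) \<Rightarrow> bx" where
  "child T s = (let a = fst T; b = snd T; m = (1/2) *\<^sub>R (a + b) in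
     ((\<chi> i. if s i then m $ i else a $ i), (\<chi> i. if s i then b $ i else m $ i)))"

lemma child_comp:
  "fst (child T s) $ i = (if s i then (fst T $ i + snd T $ i) / 2 else fst T $ i)"
  "snd (child T s) $ i = (if s i then snd T $ i else (fst T $ i + snd T $ i) / 2)"
  by (simp_all add: child_def Let_def)

lemma refine_box_eq: "refine_box T = range (child T)"
  unfolding refine_box_def child_def Let_def by auto

lemma mem_obx: "x \<in> obx T \<longleftrightarrow> (\<forall>i. fst T $ i < x $ i \<and> x $ i < snd T $ i)"
  by (simp add: obx_def mem_box_cart)

lemma mem_cbx: "x \<in> cbx T \<longleftrightarrow> (\<forall>i. fst T $ i \<le> x $ i \<and> x $ i \<le> snd T $ i)"
  by (simp add: cbx_def mem_box_cart)

lemma child_obx: "obx (child T s) \<subseteq> obx T"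
proof
  fix x assume x: "x \<in> obx (child T s)"
  show "x \<in> obx T" unfolding mem_obx
  proof
    fix i
    from x have "fst (child T s) $ i < x $ i \<and> x $ i < snd (child T s) $ i" unfolding mem_obx by blast
    then show "fst T $ i < x $ i \<and> x $ i < snd T $ i" unfolding child_comp by (cases "s i") auto
  qed
qed

lemma child_nondeg: "nondeg T \<Longrightarrow> nondeg (child T s)"
  unfolding nondeg_def child_comp by auto

lemma child_cbx: "nondeg T \<Longrightarrow> cbx (child T s) \<subseteq> cbx T"
proof
  fix x assume nd: "nondeg T" and x: "x \<in> cbx (child T s)"
  show "x \<in> cbx T" unfolding mem_cbx
  proof
    fix i
    from x have "fst (child T s) $ i \<le> x $ i \<and> x $ i \<le> snd (child T s) $ i" unfolding mem_cbx by blast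
    moreover have "fst T $ i < snd T $ i" using nd unfolding nondeg_def by blast
    ultimately show "fst T $ i \<le> x $ i \<and> x $ i \<le> snd T $ i" unfolding child_comp by (cases "s i") auto
  qed
qed

lemma child_disj:
  assumes "s \<noteq> s'"
  shows "obx (child T s) \<inter> obx (child T s') = {}"
proof -
  from assms obtain i where i: "s i \<noteq> s' i" by blast
  show ?thesis
  proof (rule ccontr)
    assume "obx (child T s) \<inter> obx (child T s') \<noteq> {}"
    then obtain x where "x \<in> obx (child T s)" "x \<in> obx (child T s')" by blast
    then have "fst (child T s) $ i < x $ i \<and> x $ i < snd (child T s) $ i"
       "fst (child T s') $ i < x $ i \<and> x $ i < snd (child T s') $ i" unfolding mem_obx by blast+
    then show False using i unfolding child_comp by (cases "s i") auto
  qed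
qed

lemma child_cover:
  assumes "x \<in> cbx T"
  shows "x \<in> cbx (child T (\<lambda>i. (fst T $ i + snd T $ i) / 2 \<le> x $ i))"
  using assms unfolding mem_cbx child_comp by auto

lemma finite_refine_box: "finite (refine_box T)"
  unfolding refine_box_eq by simp

lemma refine_mem: "T' \<in> refine M \<longleftrightarrow> (\<exists>T\<in>M. \<exists>s. T' = child T s)"
  unfolding refine_def refine_box_eq by auto

lemma gmesh_refine:
  assumes gm: "gmesh lo hi M"
  shows "gmesh lo hi (refine M)"
  unfolding gmesh_def
proof (intro conjI ballI impI)
  show "finite (refine M)" unfolding refine_def using gmeshD(1)[OF gm] finite_refine_box by auto
next
  fix T' assume "T' \<in> refine M"
  then obtain T s where T: "T \<in> M" "T' = child T s" unfolding refine_mem by blast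
  then show "nondeg T'" using child_nondeg[OF gmeshD(2)[OF gm T(1)]] by simp
  show "obx T' \<subseteq> box lo hi" using T(2) child_obx[of T s] gmeshD(3)[OF gm T(1)] by simp
next
  fix T1 T2 assume "T1 \<in> refine M" "T2 \<in> refine M" and ne: "T1 \<noteq> T2"
  then obtain A s B s' where A: "A \<in> M" "T1 = child A s" and B: "B \<in> M" "T2 = child B s'"
    unfolding refine_mem by blast
  show "obx T1 \<inter> obx T2 = {}"
  proof (cases "A = B")
    case True
    with A B ne have "s \<noteq> s'" by blast
    with True A B show ?thesis using child_disj[of s s' A] by simp
  next
    case False
    have "obx T1 \<subseteq> obx A" "obx T2 \<subseteq> obx B" using A(2) B(2) child_obx by simp_all
    with gmeshD(4)[OF gm A(1) B(1) False] show ?thesis by blast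
  qed
qed

lemma cbx_refine:
  assumes nd: "\<forall>T\<in>M. nondeg T"
  shows "(\<Union>T\<in>refine M. cbx T) = (\<Union>T\<in>M. cbx T)"
proof
  show "(\<Union>T\<in>refine M. cbx T) \<subseteq> (\<Union>T\<in>M. cbx T)"
  proof
    fix x assume "x \<in> (\<Union>T\<in>refine M. cbx T)"
    then obtain T' where T': "T' \<in> refine M" "x \<in> cbx T'" by blast
    then obtain T s where T: "T \<in> M" "T' = child T s" unfolding refine_mem by blast
    have "nondeg T" using nd T(1) by simp
    from child_cbx[OF this, of s] T(2) T'(2) have "x \<in> cbx T" by auto
    with T(1) show "x \<in> (\<Union>T\<in>M. cbx T)" by (rule UN_I)
  qed
  show "(\<Union>T\<in>M. cbx T) \<subseteq> (\<Union>T\<in>refine M. cbx T)"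
  proof
    fix x assume "x \<in> (\<Union>T\<in>M. cbx T)"
    then obtain T where T: "T \<in> M" "x \<in> cbx T" by blast
    define s where "s = (\<lambda>i. (fst T $ i + snd T $ i) / 2 \<le> x $ i)"
    have "child T s \<in> refine M" unfolding refine_mem using T(1) by blast
    moreover have "x \<in> cbx (child T s)" unfolding s_def by (rule child_cover[OF T(2)])
    ultimately show "x \<in> (\<Union>T\<in>refine M. cbx T)" by (rule UN_I)
  qed
qed

lemma gmesh_T0:
  assumes bm: "box_mesh lo hi T0"
  shows "gmesh lo hi T0"
  unfolding gmesh_def
proof (intro conjI ballI impI)
  show "finite T0" using bm unfolding box_mesh_def by blast
next
  fix T assume T: "T \<in> T0"
  then show "nondeg T" using bm unfolding box_mesh_def by blast
  have "cbx T \<subseteq> cbox lo hi" using bm T unfolding box_mesh_def by blast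
  then have "interior (cbx T) \<subseteq> interior (cbox lo hi)" by (rule interior_mono)
  then show "obx T \<subseteq> box lo hi" by (simp add: cbx_def obx_def)
next
  fix T T' assume "T \<in> T0" "T' \<in> T0" "T \<noteq> T'"
  then show "obx T \<inter> obx T' = {}" using bm unfolding box_mesh_def by blast
qed

lemma mesh_Suc: "mesh T0 (Suc k) = refine (mesh T0 k)"
  by (simp add: mesh_def)

lemma mesh_0: "mesh T0 0 = T0"
  by (simp add: mesh_def)

lemma gmesh_mesh:
  assumes bm: "box_mesh lo hi T0"
  shows "gmesh lo hi (mesh T0 k)"
  by (induction k) (simp_all add: mesh_0 mesh_Suc gmesh_T0[OF bm] gmesh_refine)



definition sc :: "real \<Rightarrow> vf \<Rightarrow> vf" where "sc r u = (\<lambda>x. r *\<^sub>R u x)"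

interpretation fv: vector_space sc
  by unfold_locales (auto simp: sc_def fun_eq_iff algebra_simps)

lemma sum_fun_app: "(\<Sum>i\<in>I. f i) x = (\<Sum>i\<in>I. f i x)"
  by (induction I rule: infinite_finite_induct) auto

lemma sc_app [simp]: "sc r u x = r *\<^sub>R u x" by (simp add: sc_def)

lemma PP_add': "PP M u \<Longrightarrow> PP M w \<Longrightarrow> PP M (u + w)"
  using PP_add[of M u w] by (simp add: plus_fun_def)
lemma PP_diff': "PP M u \<Longrightarrow> PP M w \<Longrightarrow> PP M (u - w)"
  using PP_diff[of M u w] by (simp add: fun_diff_def)
lemma PP_sc: "PP M u \<Longrightarrow> PP M (sc r u)"
  using PP_scale[of M u r] by (simp add: sc_def)
lemma PP_zero': "PP M 0"
  using PP_zero[of M] by (simp add: zero_fun_def)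

definition np :: "(real^4) \<times> (real^4) \<times> (real^4) \<Rightarrow> vf" where
  "np z = ned_poly (fst z) (fst (snd z)) (snd (snd z))"

definition rst :: "bx \<Rightarrow> vf \<Rightarrow> vf" where
  "rst T p = (\<lambda>x. if x \<in> obx T then p x else 0)"

definition FF :: "bx set \<Rightarrow> vf set" where
  "FF M = (\<lambda>(T, b). rst T (np b)) ` (M \<times> Basis)"

lemma finite_FF: "finite M \<Longrightarrow> finite (FF M)"
  unfolding FF_def by simp

lemma np_add: "np (z + z') = np z + np z'"
  by (simp add: np_def fun_eq_iff ned_poly_add)
lemma np_scale: "np (c *\<^sub>R z) = sc c (np z)"
  by (simp add: np_def fun_eq_iff ned_poly_scale)
lemma np_zero: "np 0 = 0"
  by (simp add: np_def fun_eq_iff ned_poly_zero)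

lemma rst_np_span:
  assumes T: "T \<in> M"
  shows "rst T (np z) \<in> fv.span (FF M)"
proof -
  let ?V = "{z. rst T (np z) \<in> fv.span (FF M)}"
  have "subspace ?V"
  proof (rule subspaceI)
    have "rst T (np 0) = 0" by (simp add: np_zero rst_def fun_eq_iff)
    then show "0 \<in> ?V" using fv.span_zero by simp
  next
    fix x y assume "x \<in> ?V" "y \<in> ?V"
    moreover have "rst T (np (x + y)) = rst T (np x) + rst T (np y)"
      by (simp add: np_add rst_def fun_eq_iff)
    ultimately show "x + y \<in> ?V" using fv.span_add by simp
  next
    fix c x assume "x \<in> ?V"
    moreover have "rst T (np (c *\<^sub>R x)) = sc c (rst T (np x))"
      by (simp add: np_scale rst_def fun_eq_iff)
    ultimately show "c *\<^sub>R x \<in> ?V" using fv.span_scale by simp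
  qed
  moreover have "Basis \<subseteq> ?V"
  proof
    fix b :: "(real^4) \<times> (real^4) \<times> (real^4)" assume "b \<in> Basis"
    then have "rst T (np b) \<in> FF M" unfolding FF_def using T by force
    then show "b \<in> ?V" using fv.span_base by simp
  qed
  ultimately have "span Basis \<subseteq> ?V" by (rule span_minimal[rotated])
  then show ?thesis by auto
qed

lemma PP_span:
  assumes gm: "gmesh lo hi M" and u: "PP M u"
  shows "u \<in> fv.span (FF M)"
proof -
  note fin = gmeshD(1)[OF gm]
  have "\<forall>T\<in>M. \<exists>z. \<forall>x\<in>obx T. u x = np z x"
  proof
    fix T assume "T \<in> M"
    with u obtain p where "p \<in> ned_polys" "\<forall>x\<in>obx T. u x = p x" unfolding PP_def by blast
    then show "\<exists>z. \<forall>x\<in>obx T. u x = np z x" unfolding ned_polys_def np_def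
      by (auto intro: exI[of _ "(a, b, c)" for a b c])
  qed
  then obtain Z where Z: "\<forall>T\<in>M. \<forall>x\<in>obx T. u x = np (Z T) x" by metis
  have "u = (\<Sum>T\<in>M. rst T (np (Z T)))"
  proof
    fix x
    show "u x = (\<Sum>T\<in>M. rst T (np (Z T))) x"
      unfolding sum_fun_app
    proof (cases "\<exists>T\<in>M. x \<in> obx T")
      case True
      then obtain T where T: "T \<in> M" "x \<in> obx T" by blast
      have "(\<Sum>T'\<in>M. rst T' (np (Z T')) x) = (\<Sum>T'\<in>M. if T' = T then np (Z T) x else 0)"
      proof (rule sum.cong[OF refl])
        fix T' assume T': "T' \<in> M"
        show "rst T' (np (Z T')) x = (if T' = T then np (Z T) x else 0)"
          using gmeshD(4)[OF gm T' T(1)] T unfolding rst_def by auto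
      qed
      also have "\<dots> = np (Z T) x" using T(1) fin by simp
      finally show "u x = (\<Sum>T'\<in>M. rst T' (np (Z T')) x)" using Z T by simp
    next
      case False
      then have "u x = 0" using u unfolding PP_def by blast
      moreover have "(\<Sum>T'\<in>M. rst T' (np (Z T')) x) = 0" using False unfolding rst_def by (auto intro: sum.neutral)
      ultimately show "u x = (\<Sum>T'\<in>M. rst T' (np (Z T')) x)" by simp
    qed
  qed
  also have "\<dots> \<in> fv.span (FF M)" by (intro fv.span_sum rst_np_span)
  finally show ?thesis .
qed



definition linS :: "vf set \<Rightarrow> (vf \<Rightarrow> real) \<Rightarrow> bool" where
  "linS S \<psi> \<longleftrightarrow> (\<forall>x\<in>S. \<forall>y\<in>S. \<psi> (x + y) = \<psi> x + \<psi> y) \<and> (\<forall>c. \<forall>x\<in>S. \<psi> (sc c x) = c * \<psi> x)"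

locale amesh =
  fixes \<alpha> :: real and lo hi :: pt and M :: "bx set"
  assumes a0: "0 \<le> \<alpha>" and gm: "gmesh lo hi M"
begin

abbreviation a where "a \<equiv> aform \<alpha> lo hi"

lemma a_addL: "PP M u \<Longrightarrow> PP M w \<Longrightarrow> PP M z \<Longrightarrow> a (u + w) z = a u z + a w z"
  using aform_add[OF gm, of u w z \<alpha>] by (simp add: plus_fun_def)
lemma a_scL: "PP M u \<Longrightarrow> PP M z \<Longrightarrow> a (sc c u) z = c * a u z"
  using aform_scale[OF gm, of u z \<alpha> c] by (simp add: sc_def)
lemma a_sym: "a u w = a w u" by (rule aform_sym)
lemma a_addR: "PP M u \<Longrightarrow> PP M w \<Longrightarrow> PP M z \<Longrightarrow> a z (u + w) = a z u + a z w"
  using a_addL[of u w z] a_sym[of z "u + w"] a_sym[of z u] a_sym[of z w] by simp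
lemma a_scR: "PP M u \<Longrightarrow> PP M z \<Longrightarrow> a z (sc c u) = c * a z u"
  using a_scL[of u z c] a_sym[of z "sc c u"] a_sym[of z u] by simp
lemma a_diffL: "PP M u \<Longrightarrow> PP M w \<Longrightarrow> PP M z \<Longrightarrow> a (u - w) z = a u z - a w z"
proof -
  assume u: "PP M u" and w: "PP M w" and z: "PP M z"
  have e: "u - w = u + sc (-1) w" by (simp add: fun_eq_iff)
  have 1: "a (u + sc (-1) w) z = a u z + a (sc (-1) w) z" by (rule a_addL[OF u PP_sc[OF w] z])
  have 2: "a (sc (-1) w) z = - a w z" using a_scL[OF w z, of "-1"] by simp
  show ?thesis using 1 2 e by (metis add_uminus_conv_diff)
qed
lemma a_diffR: "PP M u \<Longrightarrow> PP M w \<Longrightarrow> PP M z \<Longrightarrow> a z (u - w) = a z u - a z w"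
  using a_diffL[of u w z] a_sym[of z "u - w"] a_sym[of z u] a_sym[of z w] by simp
lemma a_zeroL: "PP M z \<Longrightarrow> a 0 z = 0"
proof -
  assume z: "PP M z"
  have "(0::vf) = sc 0 0" by (simp add: fun_eq_iff)
  then show ?thesis using a_scL[OF PP_zero' z, of 0] by simp
qed
lemma a_zeroR: "PP M z \<Longrightarrow> a z 0 = 0"
  using a_zeroL[of z] a_sym[of z 0] by simp
lemma a_sumL: "(\<And>i. i \<in> I \<Longrightarrow> PP M (f i)) \<Longrightarrow> PP M z \<Longrightarrow> a (\<Sum>i\<in>I. f i) z = (\<Sum>i\<in>I. a (f i) z)"
proof (induction I rule: infinite_finite_induct)
  case (infinite A)
  have "a 0 z = 0" using infinite a_zeroL by blast
  moreover have "(\<Sum>i\<in>A. f i) = 0" "(\<Sum>i\<in>A. a (f i) z) = 0" using infinite(1) by simp_all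
  ultimately show ?case by (simp only:)
next
  case empty
  have "a 0 z = 0" using empty a_zeroL by blast
  then show ?case by (simp only: sum.empty)
next
  case (insert x A)
  have "PP M (\<Sum>i\<in>A. f i)" using PP_sum[of A M f] insert.prems by (simp add: sum_fun_app[abs_def])
  then have "a (f x + (\<Sum>i\<in>A. f i)) z = a (f x) z + a (\<Sum>i\<in>A. f i) z"
    using insert.prems by (intro a_addL) auto
  also have "a (\<Sum>i\<in>A. f i) z = (\<Sum>i\<in>A. a (f i) z)" using insert by simp
  finally show ?case unfolding sum.insert[OF insert(1,2)] .
qed
lemma a_sumR: "(\<And>i. i \<in> I \<Longrightarrow> PP M (f i)) \<Longrightarrow> PP M z \<Longrightarrow> a z (\<Sum>i\<in>I. f i) = (\<Sum>i\<in>I. a z (f i))"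
  using a_sumL[of I f z] a_sym[of z] by simp
lemma a_nonneg: "PP M u \<Longrightarrow> 0 \<le> a u u"
  by (rule aform_nonneg[OF a0 gm])
lemma a_def0: "PP M u \<Longrightarrow> a u u = 0 \<Longrightarrow> u = 0"
  using aform_def0[OF a0 gm] by (auto simp: fun_eq_iff)

lemma PP_sum': "(\<And>i. i \<in> I \<Longrightarrow> PP M (f i)) \<Longrightarrow> PP M (\<Sum>i\<in>I. f i)"
  using PP_sum[of I M f] by (simp add: sum_fun_app[abs_def])

lemma linS_add: "linS S \<psi> \<Longrightarrow> x \<in> S \<Longrightarrow> y \<in> S \<Longrightarrow> \<psi> (x + y) = \<psi> x + \<psi> y"
  unfolding linS_def by blast
lemma linS_sc: "linS S \<psi> \<Longrightarrow> x \<in> S \<Longrightarrow> \<psi> (sc c x) = c * \<psi> x"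
  unfolding linS_def by blast
lemma subsp_zero: "fv.subspace S \<Longrightarrow> 0 \<in> S"
  unfolding fv.subspace_def by blast
lemma subsp_add: "fv.subspace S \<Longrightarrow> x \<in> S \<Longrightarrow> y \<in> S \<Longrightarrow> x + y \<in> S"
  unfolding fv.subspace_def by blast
lemma subsp_sc: "fv.subspace S \<Longrightarrow> x \<in> S \<Longrightarrow> sc c x \<in> S"
  unfolding fv.subspace_def by blast
lemma linS_zero: "linS S \<psi> \<Longrightarrow> fv.subspace S \<Longrightarrow> \<psi> 0 = 0"
proof -
  assume l: "linS S \<psi>" and S: "fv.subspace S"
  have e: "(0::vf) = sc 0 0" by (simp add: fun_eq_iff)
  have "\<psi> (sc 0 0) = 0 * \<psi> 0" by (rule linS_sc[OF l subsp_zero[OF S]])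
  then show ?thesis using e by simp
qed

lemma ext_span:
  assumes S: "fv.subspace S" "S \<subseteq> Collect (PP M)" and B: "B \<subseteq> S"
    and u: "PP M u" and \<psi>: "linS S \<psi>" and eq: "\<forall>b\<in>B. a u b = \<psi> b"
  shows "\<forall>y\<in>fv.span B. a u y = \<psi> y"
proof -
  let ?V = "{y \<in> S. a u y = \<psi> y}"
  have z0: "0 \<in> S" by (rule subsp_zero[OF S(1)])
  have "fv.subspace ?V"
    unfolding fv.subspace_def
  proof (intro conjI ballI allI)
    have "\<psi> 0 = 0" by (rule linS_zero[OF \<psi> S(1)])
    then show "0 \<in> ?V" using z0 a_zeroR[OF u] by simp
  next
    fix x y assume x: "x \<in> ?V" and y: "y \<in> ?V"
    have xS: "x \<in> S" and yS: "y \<in> S" using x y by auto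
    have xP: "PP M x" and yP: "PP M y" using xS yS S(2) by auto
    have "x + y \<in> S" by (rule subsp_add[OF S(1) xS yS])
    moreover have "a u (x + y) = \<psi> (x + y)"
      using a_addR[OF xP yP u] linS_add[OF \<psi> xS yS] x y by simp
    ultimately show "x + y \<in> ?V" by simp
  next
    fix c x assume x: "x \<in> ?V"
    have xS: "x \<in> S" using x by auto
    have xP: "PP M x" using xS S(2) by auto
    have "sc c x \<in> S" by (rule subsp_sc[OF S(1) xS])
    moreover have "a u (sc c x) = \<psi> (sc c x)"
      using a_scR[OF xP u] linS_sc[OF \<psi> xS] x by simp
    ultimately show "sc c x \<in> ?V" by simp
  qed
  moreover have "B \<subseteq> ?V" using B eq by blast
  ultimately have "fv.span B \<subseteq> ?V" by (intro fv.span_minimal)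
  then show ?thesis by blast
qed

lemma linS_a: "PP M b \<Longrightarrow> S \<subseteq> Collect (PP M) \<Longrightarrow> linS S (\<lambda>s. a b s)"
  unfolding linS_def
proof (intro conjI ballI allI)
  fix x y assume "PP M b" "S \<subseteq> Collect (PP M)" "x \<in> S" "y \<in> S"
  then show "a b (x + y) = a b x + a b y" by (intro a_addR) auto
next
  fix c x assume "PP M b" "S \<subseteq> Collect (PP M)" "x \<in> S"
  then show "a b (sc c x) = c * a b x" by (intro a_scR) auto
qed

lemma gs:
  assumes S: "fv.subspace S" "S \<subseteq> Collect (PP M)"
  shows "finite B \<Longrightarrow> B \<subseteq> S \<Longrightarrow> \<forall>\<psi>. linS S \<psi> \<longrightarrow> (\<exists>u\<in>fv.span B. \<forall>b\<in>B. a u b = \<psi> b)"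
proof (induction B rule: finite_induct)
  case empty
  show ?case using fv.span_zero by blast
next
  case (insert b B)
  have bS: "b \<in> S" and BS: "B \<subseteq> S" using insert.prems by auto
  have spS: "fv.span B \<subseteq> S" using BS S(1) by (intro fv.span_minimal)
  have bP: "PP M b" using bS S(2) by blast
  show ?case
  proof (intro allI impI)
    fix \<psi> assume \<psi>: "linS S \<psi>"
    have IH: "\<forall>\<psi>. linS S \<psi> \<longrightarrow> (\<exists>u\<in>fv.span B. \<forall>b\<in>B. a u b = \<psi> b)" by (rule insert.IH[OF BS])
    from IH \<psi> obtain u' where u': "u' \<in> fv.span B" "\<forall>b'\<in>B. a u' b' = \<psi> b'" by blast
    have lb: "linS S (\<lambda>s. a b s)" by (rule linS_a[OF bP S(2)])
    from IH lb obtain z where z: "z \<in> fv.span B" "\<forall>b'\<in>B. a z b' = a b b'" by blast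
    have u'S: "u' \<in> S" and zS: "z \<in> S" using u'(1) z(1) spS by auto
    have u'P: "PP M u'" and zP: "PP M z" using u'S zS S(2) by auto
    define e where "e = b - z"
    have eS: "e \<in> S" unfolding e_def by (rule fv.subspace_diff[OF S(1) bS zS])
    have eP: "PP M e" using eS S(2) by blast
    have e0: "\<forall>b'\<in>B. a e b' = 0"
    proof
      fix b' assume b': "b' \<in> B"
      then have b'P: "PP M b'" using BS S(2) by blast
      have "a e b' = a b b' - a z b'" unfolding e_def by (rule a_diffL[OF bP zP b'P])
      then show "a e b' = 0" using z(2) b' by simp
    qed
    have l0: "linS S (\<lambda>s. 0)" unfolding linS_def by simp
    have eB: "\<forall>y\<in>fv.span B. a e y = 0"
      using ext_span[OF S BS eP l0] e0 by simp
    have u'B: "\<forall>y\<in>fv.span B. a u' y = \<psi> y"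
      using ext_span[OF S BS u'P \<psi>] u'(2) by simp
    have bez: "b = e + z" unfolding e_def by simp
    have mono: "fv.span B \<subseteq> fv.span (insert b B)" by (rule fv.span_mono) blast
    have u'span: "u' \<in> fv.span (insert b B)" using u'(1) mono by blast
    show "\<exists>u\<in>fv.span (insert b B). \<forall>b'\<in>insert b B. a u b' = \<psi> b'"
    proof (cases "a e e = 0")
      case True
      then have "e = 0" using a_def0[OF eP] by simp
      then have "b = z" using bez by simp
      then have "a u' b = \<psi> b" using u'B z(1) by simp
      with u'span u'(2) show ?thesis by blast
    next
      case False
      define c where "c = (\<psi> e - a u' e) / a e e"
      define u where "u = u' + sc c e"
      have bspan: "b \<in> fv.span (insert b B)" by (rule fv.span_base) simp
      have zspan: "z \<in> fv.span (insert b B)" using z(1) mono by blast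
      have espan: "e \<in> fv.span (insert b B)" unfolding e_def by (rule fv.span_diff[OF bspan zspan])
      have uspan: "u \<in> fv.span (insert b B)" unfolding u_def
        by (rule fv.span_add[OF u'span fv.span_scale[OF espan]])
      have uP: "PP M u" unfolding u_def by (rule PP_add'[OF u'P PP_sc[OF eP]])
      have ab: "a u b = \<psi> b"
      proof -
        have "a u b = a u e + a u z" unfolding bez by (rule a_addR[OF eP zP uP])
        also have "a u e = a u' e + a (sc c e) e" unfolding u_def by (rule a_addL[OF u'P PP_sc[OF eP] eP])
        also have "a (sc c e) e = c * a e e" by (rule a_scL[OF eP eP])
        also have "a u' e + c * a e e = \<psi> e" using False by (simp add: c_def)
        also have "a u z = a u' z + a (sc c e) z" unfolding u_def by (rule a_addL[OF u'P PP_sc[OF eP] zP])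
        also have "a (sc c e) z = c * a e z" by (rule a_scL[OF eP zP])
        also have "a u' z + c * a e z = \<psi> z" using u'B eB z(1) by simp
        also have "\<psi> e + \<psi> z = \<psi> (e + z)" by (rule linS_add[OF \<psi> eS zS, symmetric])
        finally show ?thesis unfolding bez .
      qed
      have aB: "a u b' = \<psi> b'" if b'B: "b' \<in> B" for b'
      proof -
        have b'P: "PP M b'" using b'B BS S(2) by blast
        have "a u b' = a u' b' + a (sc c e) b'" unfolding u_def by (rule a_addL[OF u'P PP_sc[OF eP] b'P])
        also have "a (sc c e) b' = c * a e b'" by (rule a_scL[OF eP b'P])
        also have "a u' b' + c * a e b' = \<psi> b'" using u'(2) e0 b'B by simp
        finally show ?thesis .
      qed
      show ?thesis using uspan ab aB by blast
    qed
  qed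
qed

lemma proj_exists:
  assumes S: "fv.subspace S" "S \<subseteq> Collect (PP M)" and \<psi>: "linS S \<psi>"
  shows "\<exists>!u. u \<in> S \<and> (\<forall>s\<in>S. a u s = \<psi> s)"
proof -
  obtain B where B: "B \<subseteq> S" "fv.independent B" "S \<subseteq> fv.span B"
    using fv.basis_exists by metis
  have "S \<subseteq> fv.span (FF M)" using S(2) PP_span[OF gm] by blast
  with B(1) have "B \<subseteq> fv.span (FF M)" by (rule order.trans)
  then have finB: "finite B" using fv.independent_span_bound[OF finite_FF[OF gmeshD(1)[OF gm]] B(2)] by blast
  have "\<forall>\<psi>. linS S \<psi> \<longrightarrow> (\<exists>u\<in>fv.span B. \<forall>b\<in>B. a u b = \<psi> b)" by (rule gs[OF S finB B(1)])
  with \<psi> obtain u where u: "u \<in> fv.span B" "\<forall>b\<in>B. a u b = \<psi> b" by blast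
  have spS: "fv.span B \<subseteq> S" using B(1) S(1) by (intro fv.span_minimal)
  have uS: "u \<in> S" using u(1) spS by blast
  have uP: "PP M u" using uS S(2) by blast
  have "\<forall>y\<in>fv.span B. a u y = \<psi> y" using ext_span[OF S B(1) uP \<psi>] u(2) by simp
  then have ex: "u \<in> S \<and> (\<forall>s\<in>S. a u s = \<psi> s)" using uS B(3) by blast
  show ?thesis
  proof (rule ex1I[of _ u])
    show "u \<in> S \<and> (\<forall>s\<in>S. a u s = \<psi> s)" by (rule ex)
  next
    fix v assume v: "v \<in> S \<and> (\<forall>s\<in>S. a v s = \<psi> s)"
    have vS: "v \<in> S" using v by blast
    have dS: "u - v \<in> S" by (rule fv.subspace_diff[OF S(1) uS vS])
    have vP: "PP M v" using vS S(2) by blast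
    have dP: "PP M (u - v)" using dS S(2) by blast
    have "a (u - v) (u - v) = a u (u - v) - a v (u - v)" by (rule a_diffL[OF uP vP dP])
    also have "\<dots> = 0" using ex v dS by simp
    finally have "u - v = 0" using a_def0[OF dP] by simp
    then show "v = u" by simp
  qed
qed

end



lemma curl_cong:
  assumes e: "e > 0" and eq: "\<forall>y\<in>ball x e. u y = w y"
  shows "curl u x = curl w x"
proof -
  have "pdiff u i j x = pdiff w i j x" for i j
    unfolding pdiff_def
  proof (rule deriv_cong_ev[OF _ refl])
    have "\<forall>t\<in>ball 0 e. u (x + t *\<^sub>R axis j 1) $ i = w (x + t *\<^sub>R axis j 1) $ i"
    proof
      fix t :: real assume "t \<in> ball 0 e"
      then have "x + t *\<^sub>R axis j 1 \<in> ball x e" by (simp add: dist_norm)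
      then show "u (x + t *\<^sub>R axis j 1) $ i = w (x + t *\<^sub>R axis j 1) $ i" using eq by simp
    qed
    then show "\<forall>\<^sub>F t in nhds 0. u (x + t *\<^sub>R axis j 1) $ i = w (x + t *\<^sub>R axis j 1) $ i"
      unfolding eventually_nhds using e by (intro exI[of _ "ball 0 e"]) auto
  qed
  then show ?thesis unfolding curl_def by simp
qed

lemma loc_spec:
  assumes u: "PP M u" and T: "T \<in> M"
  shows "loc u T \<in> ned_polys \<and> (\<forall>x\<in>obx T. u x = loc u T x)"
proof -
  from u T have "\<exists>p. p \<in> ned_polys \<and> (\<forall>x\<in>obx T. u x = p x)" unfolding PP_def by blast
  then show ?thesis unfolding loc_def by (rule someI_ex)
qed

lemma poly_eq_cbx:
  assumes p: "p \<in> ned_polys" and q: "q \<in> ned_polys" and nd: "nondeg T"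
    and eq: "\<forall>x\<in>obx T. p x = q x" and x: "x \<in> cbx T"
  shows "p x = q x"
proof -
  have cl: "closed {x. p x = q x}"
    using ned_polys_cont[OF p] ned_polys_cont[OF q] by (intro closed_Collect_eq) auto
  have "obx T \<subseteq> {x. p x = q x}" using eq by blast
  then have "closure (obx T) \<subseteq> {x. p x = q x}" using cl by (rule closure_minimal)
  moreover have "closure (obx T) = cbx T"
    using nondeg_ne[OF nd] unfolding obx_def cbx_def by (rule closure_box)
  ultimately show ?thesis using x by blast
qed

lemma loc_add:
  assumes u: "PP M u" and w: "PP M w" and T: "T \<in> M" and nd: "nondeg T" and x: "x \<in> cbx T"
  shows "loc (u + w) T x = loc u T x + loc w T x"
proof -
  have uw: "PP M (u + w)" by (rule PP_add'[OF u w])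
  note lu = loc_spec[OF u T] and lw = loc_spec[OF w T] and luw = loc_spec[OF uw T]
  have p: "(\<lambda>x. loc u T x + loc w T x) \<in> ned_polys" using lu lw by (intro ned_polys_add) auto
  have "\<forall>y\<in>obx T. loc (u + w) T y = loc u T y + loc w T y" using lu lw luw by auto
  then show ?thesis using poly_eq_cbx[OF conjunct1[OF luw] p nd _ x] by simp
qed

lemma loc_sc:
  assumes u: "PP M u" and T: "T \<in> M" and nd: "nondeg T" and x: "x \<in> cbx T"
  shows "loc (sc c u) T x = c *\<^sub>R loc u T x"
proof -
  have uw: "PP M (sc c u)" by (rule PP_sc[OF u])
  note lu = loc_spec[OF u T] and luw = loc_spec[OF uw T]
  have p: "(\<lambda>x. c *\<^sub>R loc u T x) \<in> ned_polys" using lu by (intro ned_polys_scale) auto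
  have "\<forall>y\<in>obx T. loc (sc c u) T y = c *\<^sub>R loc u T y" using lu luw by auto
  then show ?thesis using poly_eq_cbx[OF conjunct1[OF luw] p nd _ x] by simp
qed

lemma loc_zero:
  assumes T: "T \<in> M" and nd: "nondeg T" and x: "x \<in> cbx T"
  shows "loc 0 T x = 0"
proof -
  note luw = loc_spec[OF PP_zero' T]
  have "\<forall>y\<in>obx T. loc 0 T y = (\<lambda>x. 0) y" using luw by auto
  then show ?thesis using poly_eq_cbx[OF conjunct1[OF luw] ned_polys_zero nd _ x] by simp
qed

lemma is_face_sub:
  assumes nd: "nondeg T" and F: "is_face T F"
  shows "cbx F \<subseteq> cbx T"
proof
  fix x assume x: "x \<in> cbx F"
  show "x \<in> cbx T" unfolding mem_cbx
  proof
    fix i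
    have "fst F $ i \<le> x $ i \<and> x $ i \<le> snd F $ i" using x unfolding mem_cbx by blast
    moreover have "fst T $ i < snd T $ i" using nd unfolding nondeg_def by blast
    moreover have "(fst F $ i = fst T $ i \<and> snd F $ i = snd T $ i)
                       \<or> (fst F $ i = fst T $ i \<and> snd F $ i = fst T $ i)
                       \<or> (fst F $ i = snd T $ i \<and> snd F $ i = snd T $ i)" using F unfolding is_face_def by blast
    ultimately show "fst T $ i \<le> x $ i \<and> x $ i \<le> snd T $ i" by auto
  qed
qed

lemma is_face_le:
  assumes nd: "nondeg T" and F: "is_face T F"
  shows "fst F $ i \<le> snd F $ i"
proof -
  have "fst T $ i < snd T $ i" using nd unfolding nondeg_def by blast
  moreover have "(fst F $ i = fst T $ i \<and> snd F $ i = snd T $ i)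
                     \<or> (fst F $ i = fst T $ i \<and> snd F $ i = fst T $ i)
                     \<or> (fst F $ i = snd T $ i \<and> snd F $ i = snd T $ i)" using F unfolding is_face_def by blast
  ultimately show ?thesis by auto
qed

definition C3 :: "bx set \<Rightarrow> vf \<Rightarrow> bool" where
  "C3 M v \<longleftrightarrow> (\<forall>T\<in>M. \<forall>T'\<in>M. \<forall>F i. is_face T F \<and> is_face T' F \<and> fdim F = 2 \<and> fst F $ i = snd F $ i \<longrightarrow>
        (\<forall>x\<in>cbx F. \<forall>j. j \<noteq> i \<longrightarrow> loc v T x $ j = loc v T' x $ j))"

definition C4 :: "pt \<Rightarrow> pt \<Rightarrow> bx set \<Rightarrow> vf \<Rightarrow> bool" where
  "C4 lo hi M v \<longleftrightarrow> (\<forall>T\<in>M. \<forall>F i. is_face T F \<and> fdim F = 2 \<and> fst F $ i = snd F $ i \<and> cbx F \<subseteq> frontier (box lo hi) \<longrightarrow>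
        (\<forall>x\<in>cbx F. \<forall>j. j \<noteq> i \<longrightarrow> loc v T x $ j = 0))"

lemma ned_alt: "ned lo hi M = {v. PP M v \<and> C3 M v \<and> C4 lo hi M v}"
  unfolding ned_def PP_def C3_def C4_def by (simp add: conj_assoc)

lemma C3_add:
  assumes gm: "gmesh lo hi M" and u: "PP M u" "C3 M u" and w: "PP M w" "C3 M w"
  shows "C3 M (u + w)"
  unfolding C3_def
proof (intro ballI allI impI)
  fix T T' F i x j
  assume T: "T \<in> M" and T': "T' \<in> M" and H: "is_face T F \<and> is_face T' F \<and> fdim F = 2 \<and> fst F $ i = snd F $ i"
    and x: "x \<in> cbx F" and j: "j \<noteq> i"
  have nd: "nondeg T" "nondeg T'" using gmeshD(2)[OF gm] T T' by auto
  have xT: "x \<in> cbx T" and xT': "x \<in> cbx T'" using is_face_sub[OF nd(1)] is_face_sub[OF nd(2)] H x by blast+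
  have "loc u T x $ j = loc u T' x $ j" using u(2) T T' H x j unfolding C3_def by blast
  moreover have "loc w T x $ j = loc w T' x $ j" using w(2) T T' H x j unfolding C3_def by blast
  ultimately show "loc (u + w) T x $ j = loc (u + w) T' x $ j"
    using loc_add[OF u(1) w(1) T nd(1) xT] loc_add[OF u(1) w(1) T' nd(2) xT'] by simp
qed

lemma C3_sc:
  assumes gm: "gmesh lo hi M" and u: "PP M u" "C3 M u"
  shows "C3 M (sc c u)"
  unfolding C3_def
proof (intro ballI allI impI)
  fix T T' F i x j
  assume T: "T \<in> M" and T': "T' \<in> M" and H: "is_face T F \<and> is_face T' F \<and> fdim F = 2 \<and> fst F $ i = snd F $ i"
    and x: "x \<in> cbx F" and j: "j \<noteq> i"
  have nd: "nondeg T" "nondeg T'" using gmeshD(2)[OF gm] T T' by auto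
  have xT: "x \<in> cbx T" and xT': "x \<in> cbx T'" using is_face_sub[OF nd(1)] is_face_sub[OF nd(2)] H x by blast+
  have "loc u T x $ j = loc u T' x $ j" using u(2) T T' H x j unfolding C3_def by blast
  then show "loc (sc c u) T x $ j = loc (sc c u) T' x $ j"
    using loc_sc[OF u(1) T nd(1) xT] loc_sc[OF u(1) T' nd(2) xT'] by simp
qed

lemma C3_zero:
  assumes gm: "gmesh lo hi M"
  shows "C3 M 0"
  unfolding C3_def
proof (intro ballI allI impI)
  fix T T' F i x j
  assume T: "T \<in> M" and T': "T' \<in> M" and H: "is_face T F \<and> is_face T' F \<and> fdim F = 2 \<and> fst F $ i = snd F $ i"
    and x: "x \<in> cbx F" and j: "j \<noteq> i"
  have nd: "nondeg T" "nondeg T'" using gmeshD(2)[OF gm] T T' by auto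
  have xT: "x \<in> cbx T" and xT': "x \<in> cbx T'" using is_face_sub[OF nd(1)] is_face_sub[OF nd(2)] H x by blast+
  show "loc 0 T x $ j = loc 0 T' x $ j" using loc_zero[OF T nd(1) xT] loc_zero[OF T' nd(2) xT'] by simp
qed

lemma C4_add:
  assumes gm: "gmesh lo hi M" and u: "PP M u" "C4 lo hi M u" and w: "PP M w" "C4 lo hi M w"
  shows "C4 lo hi M (u + w)"
  unfolding C4_def
proof (intro ballI allI impI)
  fix T F i x j
  assume T: "T \<in> M" and H: "is_face T F \<and> fdim F = 2 \<and> fst F $ i = snd F $ i \<and> cbx F \<subseteq> frontier (box lo hi)"
    and x: "x \<in> cbx F" and j: "j \<noteq> i"
  have nd: "nondeg T" using gmeshD(2)[OF gm] T by auto
  have xT: "x \<in> cbx T" using is_face_sub[OF nd] H x by blast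
  have "loc u T x $ j = 0" using u(2) T H x j unfolding C4_def by blast
  moreover have "loc w T x $ j = 0" using w(2) T H x j unfolding C4_def by blast
  ultimately show "loc (u + w) T x $ j = 0"
    using loc_add[OF u(1) w(1) T nd xT] by simp
qed

lemma C4_sc:
  assumes gm: "gmesh lo hi M" and u: "PP M u" "C4 lo hi M u"
  shows "C4 lo hi M (sc c u)"
  unfolding C4_def
proof (intro ballI allI impI)
  fix T F i x j
  assume T: "T \<in> M" and H: "is_face T F \<and> fdim F = 2 \<and> fst F $ i = snd F $ i \<and> cbx F \<subseteq> frontier (box lo hi)"
    and x: "x \<in> cbx F" and j: "j \<noteq> i"
  have nd: "nondeg T" using gmeshD(2)[OF gm] T by auto
  have xT: "x \<in> cbx T" using is_face_sub[OF nd] H x by blast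
  have "loc u T x $ j = 0" using u(2) T H x j unfolding C4_def by blast
  then show "loc (sc c u) T x $ j = 0" using loc_sc[OF u(1) T nd xT] by simp
qed

lemma C4_zero:
  assumes gm: "gmesh lo hi M"
  shows "C4 lo hi M 0"
  unfolding C4_def
proof (intro ballI allI impI)
  fix T F i x j
  assume T: "T \<in> M" and H: "is_face T F \<and> fdim F = 2 \<and> fst F $ i = snd F $ i \<and> cbx F \<subseteq> frontier (box lo hi)"
    and x: "x \<in> cbx F" and j: "j \<noteq> i"
  have nd: "nondeg T" using gmeshD(2)[OF gm] T by auto
  have xT: "x \<in> cbx T" using is_face_sub[OF nd] H x by blast
  show "loc 0 T x $ j = 0" using loc_zero[OF T nd xT] by simp
qed

lemma ned_subspace:
  assumes gm: "gmesh lo hi M"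
  shows "fv.subspace (ned lo hi M)"
  unfolding fv.subspace_def ned_alt
proof (intro conjI ballI allI)
  show "0 \<in> {v. PP M v \<and> C3 M v \<and> C4 lo hi M v}"
    using PP_zero' C3_zero[OF gm] C4_zero[OF gm] by simp
next
  fix x y assume "x \<in> {v. PP M v \<and> C3 M v \<and> C4 lo hi M v}" "y \<in> {v. PP M v \<and> C3 M v \<and> C4 lo hi M v}"
  then show "x + y \<in> {v. PP M v \<and> C3 M v \<and> C4 lo hi M v}"
    using PP_add' C3_add[OF gm] C4_add[OF gm] by simp
next
  fix c x assume "x \<in> {v. PP M v \<and> C3 M v \<and> C4 lo hi M v}"
  then show "sc c x \<in> {v. PP M v \<and> C3 M v \<and> C4 lo hi M v}"
    using PP_sc C3_sc[OF gm] C4_sc[OF gm] by simp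
qed

lemma ned_PP: "v \<in> ned lo hi M \<Longrightarrow> PP M v"
  unfolding ned_alt by simp



lemma face_elem:
  assumes gm: "gmesh lo hi M" and e: "e \<in> faces M 1"
  shows "(SOME T. T \<in> M \<and> cbx e \<subseteq> cbx T) \<in> M \<and> cbx e \<subseteq> cbx (SOME T. T \<in> M \<and> cbx e \<subseteq> cbx T)"
    "\<forall>i. fst e $ i \<le> snd e $ i"
proof -
  from e obtain T where T: "T \<in> M" "is_face T e" unfolding faces_def by blast
  have nd: "nondeg T" using gmeshD(2)[OF gm T(1)] .
  have "T \<in> M \<and> cbx e \<subseteq> cbx T" using T is_face_sub[OF nd] by blast
  then show "(SOME T. T \<in> M \<and> cbx e \<subseteq> cbx T) \<in> M \<and> cbx e \<subseteq> cbx (SOME T. T \<in> M \<and> cbx e \<subseteq> cbx T)"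
    by (rule someI)
  show "\<forall>i. fst e $ i \<le> snd e $ i" using is_face_le[OF nd T(2)] by blast
qed

lemma seg_in:
  assumes le: "\<forall>i. fst e $ i \<le> snd e $ i" and s: "s \<in> {0..1::real}"
  shows "fst e + s *\<^sub>R (snd e - fst e) \<in> cbx e"
  unfolding mem_cbx
proof
  fix i
  have d: "0 \<le> snd e $ i - fst e $ i" using le by simp
  have "0 \<le> s * (snd e $ i - fst e $ i)" using s d by simp
  moreover have "s * (snd e $ i - fst e $ i) \<le> 1 * (snd e $ i - fst e $ i)"
    using s d by (intro mult_right_mono) auto
  ultimately show "fst e $ i \<le> (fst e + s *\<^sub>R (snd e - fst e)) $ i \<and> (fst e + s *\<^sub>R (snd e - fst e)) $ i \<le> snd e $ i"
    by simp
qed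

lemma seg_cont:
  assumes p: "p \<in> ned_polys"
  shows "continuous_on {0..1} (\<lambda>s::real. p (c + s *\<^sub>R (d - c)) \<bullet> (d - c))"
proof -
  have "continuous_on {0..1} (\<lambda>s::real. p (c + s *\<^sub>R (d - c)))"
    by (rule continuous_on_compose2[OF ned_polys_cont[OF p]]) (auto intro!: continuous_intros)
  then show ?thesis by (intro continuous_intros)
qed

lemma dof_lin:
  assumes gm: "gmesh lo hi M" and e: "e \<in> faces M 1" and u: "PP M u" and w: "PP M w"
  shows "dof M (u + w) e = dof M u e + dof M w e" "dof M (sc r u) e = r * dof M u e"
proof -
  define T where "T = (SOME T. T \<in> M \<and> cbx e \<subseteq> cbx T)"
  have T: "T \<in> M" "cbx e \<subseteq> cbx T" using face_elem(1)[OF gm e] unfolding T_def by auto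
  have nd: "nondeg T" using gmeshD(2)[OF gm T(1)] .
  have le: "\<forall>i. fst e $ i \<le> snd e $ i" by (rule face_elem(2)[OF gm e])
  define c where "c = fst e"
  define d where "d = snd e"
  have inT: "c + s *\<^sub>R (d - c) \<in> cbx T" if "s \<in> {0..1}" for s
    using seg_in[OF le that] T(2) unfolding c_def d_def by blast
  have cu: "continuous_on {0..1} (\<lambda>s::real. loc u T (c + s *\<^sub>R (d - c)) \<bullet> (d - c))"
    by (rule seg_cont) (rule conjunct1[OF loc_spec[OF u T(1)]])
  have cw: "continuous_on {0..1} (\<lambda>s::real. loc w T (c + s *\<^sub>R (d - c)) \<bullet> (d - c))"
    by (rule seg_cont) (rule conjunct1[OF loc_spec[OF w T(1)]])
  have i1: "integral {0..1} (\<lambda>s. loc (u + w) T (c + s *\<^sub>R (d - c)) \<bullet> (d - c))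
     = integral {0..1} (\<lambda>s. loc u T (c + s *\<^sub>R (d - c)) \<bullet> (d - c) + loc w T (c + s *\<^sub>R (d - c)) \<bullet> (d - c))"
    by (rule integral_cong) (simp add: loc_add[OF u w T(1) nd inT] inner_add_left)
  also have "\<dots> = integral {0..1} (\<lambda>s. loc u T (c + s *\<^sub>R (d - c)) \<bullet> (d - c)) + integral {0..1} (\<lambda>s. loc w T (c + s *\<^sub>R (d - c)) \<bullet> (d - c))"
    by (rule integral_add) (auto intro: integrable_continuous_real cu cw)
  finally have i1': "integral {0..1} (\<lambda>s. loc (u + w) T (c + s *\<^sub>R (d - c)) \<bullet> (d - c)) = integral {0..1} (\<lambda>s. loc u T (c + s *\<^sub>R (d - c)) \<bullet> (d - c)) + integral {0..1} (\<lambda>s. loc w T (c + s *\<^sub>R (d - c)) \<bullet> (d - c))" .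
  have i2: "integral {0..1} (\<lambda>s. loc (sc r u) T (c + s *\<^sub>R (d - c)) \<bullet> (d - c))
     = integral {0..1} (\<lambda>s. r * (loc u T (c + s *\<^sub>R (d - c)) \<bullet> (d - c)))"
    by (rule integral_cong) (simp add: loc_sc[OF u T(1) nd inT])
  have dd: "dof M v e = (1 / norm (d - c)) * integral {0..1} (\<lambda>s. loc v T (c + s *\<^sub>R (d - c)) \<bullet> (d - c))" for v
    unfolding dof_def Let_def T_def c_def d_def ..
  show "dof M (u + w) e = dof M u e + dof M w e" unfolding dd i1' by (simp add: algebra_simps)
  show "dof M (sc r u) e = r * dof M u e" unfolding dd i2 by simp
qed

lemma dof_zero:
  assumes gm: "gmesh lo hi M" and e: "e \<in> faces M 1"
  shows "dof M 0 e = 0"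
proof -
  have "(0::vf) = sc 0 0" by (simp add: fun_eq_iff)
  then show ?thesis using dof_lin(2)[OF gm e PP_zero' PP_zero', of 0] by simp
qed



lemma patch_gen_sub:
  assumes gm: "gmesh lo hi M" and a0: "0 \<le> \<alpha>" and N: "fv.subspace N" "N \<subseteq> Collect (PP M)"
    and E: "E \<subseteq> faces M 1" and W: "W \<subseteq> Collect (PP M)"
  shows "fv.subspace {v \<in> N. (\<forall>e\<in>E. dof M v e = 0) \<and> (\<forall>w\<in>W. aform \<alpha> lo hi v w = 0)}"
proof -
  interpret amesh \<alpha> lo hi M using a0 gm by unfold_locales
  show ?thesis
    unfolding fv.subspace_def
  proof (intro conjI ballI allI)
    show "0 \<in> {v \<in> N. (\<forall>e\<in>E. dof M v e = 0) \<and> (\<forall>w\<in>W. aform \<alpha> lo hi v w = 0)}"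
      using subsp_zero[OF N(1)] dof_zero[OF gm] E a_zeroL W by blast
  next
    fix x y assume x: "x \<in> {v \<in> N. (\<forall>e\<in>E. dof M v e = 0) \<and> (\<forall>w\<in>W. aform \<alpha> lo hi v w = 0)}"
      and y: "y \<in> {v \<in> N. (\<forall>e\<in>E. dof M v e = 0) \<and> (\<forall>w\<in>W. aform \<alpha> lo hi v w = 0)}"
    have xP: "PP M x" and yP: "PP M y" using x y N(2) by auto
    have "x + y \<in> N" using x y subsp_add[OF N(1)] by blast
    moreover have "\<forall>e\<in>E. dof M (x + y) e = 0"
    proof
      fix e assume e: "e \<in> E"
      then have "dof M (x + y) e = dof M x e + dof M y e" using E dof_lin(1)[OF gm _ xP yP] by blast
      then show "dof M (x + y) e = 0" using x y e by simp
    qed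
    moreover have "\<forall>w\<in>W. aform \<alpha> lo hi (x + y) w = 0"
    proof
      fix w assume w: "w \<in> W"
      then have "aform \<alpha> lo hi (x + y) w = aform \<alpha> lo hi x w + aform \<alpha> lo hi y w"
        using W a_addL[OF xP yP] by blast
      then show "aform \<alpha> lo hi (x + y) w = 0" using x y w by simp
    qed
    ultimately show "x + y \<in> {v \<in> N. (\<forall>e\<in>E. dof M v e = 0) \<and> (\<forall>w\<in>W. aform \<alpha> lo hi v w = 0)}" by blast
  next
    fix c x assume x: "x \<in> {v \<in> N. (\<forall>e\<in>E. dof M v e = 0) \<and> (\<forall>w\<in>W. aform \<alpha> lo hi v w = 0)}"
    have xP: "PP M x" using x N(2) by auto
    have "sc c x \<in> N" using x subsp_sc[OF N(1)] by blast
    moreover have "\<forall>e\<in>E. dof M (sc c x) e = 0"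
    proof
      fix e assume e: "e \<in> E"
      then have "dof M (sc c x) e = c * dof M x e" using E dof_lin(2)[OF gm _ xP xP] by blast
      then show "dof M (sc c x) e = 0" using x e by simp
    qed
    moreover have "\<forall>w\<in>W. aform \<alpha> lo hi (sc c x) w = 0"
    proof
      fix w assume w: "w \<in> W"
      then have "aform \<alpha> lo hi (sc c x) w = c * aform \<alpha> lo hi x w"
        using W a_scL[OF xP] by blast
      then show "aform \<alpha> lo hi (sc c x) w = 0" using x w by simp
    qed
    ultimately show "sc c x \<in> {v \<in> N. (\<forall>e\<in>E. dof M v e = 0) \<and> (\<forall>w\<in>W. aform \<alpha> lo hi v w = 0)}" by blast
  qed
qed

locale setting =
  fixes \<alpha> :: real and lo hi :: pt and T0 :: "bx set"
  assumes apos: "0 < \<alpha>" and bm: "box_mesh lo hi T0"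
begin

lemma gmk: "gmesh lo hi (mesh T0 k)" by (rule gmesh_mesh[OF bm])
lemma am: "amesh \<alpha> lo hi (mesh T0 k)" using apos gmk by unfold_locales auto
lemma ak_eq: "ak (\<alpha>, lo, hi, T0) = aform \<alpha> lo hi" by (simp add: ak_def)
lemma Nk_eq: "Nk (\<alpha>, lo, hi, T0) k = ned lo hi (mesh T0 k)" by (simp add: Nk_def)
lemma Nk_sub: "fv.subspace (Nk (\<alpha>, lo, hi, T0) k)" unfolding Nk_eq by (rule ned_subspace[OF gmk])
lemma Nk_PP: "Nk (\<alpha>, lo, hi, T0) k \<subseteq> Collect (PP (mesh T0 k))" unfolding Nk_eq using ned_PP by blast

lemma NT_eq: "NT (\<alpha>, lo, hi, T0) k T = {v \<in> Nk (\<alpha>, lo, hi, T0) k. \<forall>x\<in>box lo hi - cbx T. v x = 0}"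
  by (simp add: NT_def)

lemma NT_Nk: "NT (\<alpha>, lo, hi, T0) k T \<subseteq> Nk (\<alpha>, lo, hi, T0) k" unfolding NT_eq by blast
lemma NT_PP: "NT (\<alpha>, lo, hi, T0) k T \<subseteq> Collect (PP (mesh T0 k))" using NT_Nk Nk_PP by blast

lemma NT_sub: "fv.subspace (NT (\<alpha>, lo, hi, T0) k T)"
  unfolding NT_eq fv.subspace_def
proof (intro conjI ballI allI)
  show "0 \<in> {v \<in> Nk (\<alpha>, lo, hi, T0) k. \<forall>x\<in>box lo hi - cbx T. v x = 0}"
    using fv.subspace_0[OF Nk_sub] by simp
next
  fix x y assume "x \<in> {v \<in> Nk (\<alpha>, lo, hi, T0) k. \<forall>x\<in>box lo hi - cbx T. v x = 0}"
    "y \<in> {v \<in> Nk (\<alpha>, lo, hi, T0) k. \<forall>x\<in>box lo hi - cbx T. v x = 0}"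
  then show "x + y \<in> {v \<in> Nk (\<alpha>, lo, hi, T0) k. \<forall>x\<in>box lo hi - cbx T. v x = 0}"
    using fv.subspace_add[OF Nk_sub] by simp
next
  fix c x assume "x \<in> {v \<in> Nk (\<alpha>, lo, hi, T0) k. \<forall>x\<in>box lo hi - cbx T. v x = 0}"
  then show "sc c x \<in> {v \<in> Nk (\<alpha>, lo, hi, T0) k. \<forall>x\<in>box lo hi - cbx T. v x = 0}"
    using fv.subspace_scale[OF Nk_sub] by simp
qed

lemma patch_eq: "patch_space (\<alpha>, lo, hi, T0) k X = {v \<in> Nk (\<alpha>, lo, hi, T0) k.
        (\<forall>e \<in> int_edges lo hi (mesh T0 k) - allowed (\<alpha>, lo, hi, T0) k X. dof (mesh T0 k) v e = 0) \<and>
        (\<forall>w \<in> {(\<lambda>x. \<Sum>T\<in>elems_cont (\<alpha>, lo, hi, T0) k X. wT T x) | wT. \<forall>T\<in>elems_cont (\<alpha>, lo, hi, T0) k X. wT T \<in> NT (\<alpha>, lo, hi, T0) k T}.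
            aform \<alpha> lo hi v w = 0)}"
  by (simp add: patch_space_def ak_eq)

lemma patch_sub: "fv.subspace (patch_space (\<alpha>, lo, hi, T0) k X)"
  unfolding patch_eq
proof (rule patch_gen_sub[OF gmk _ Nk_sub Nk_PP])
  show "0 \<le> \<alpha>" using apos by simp
  show "int_edges lo hi (mesh T0 k) - allowed (\<alpha>, lo, hi, T0) k X \<subseteq> faces (mesh T0 k) 1"
    unfolding int_edges_def by blast
  show "{(\<lambda>x. \<Sum>T\<in>elems_cont (\<alpha>, lo, hi, T0) k X. wT T x) | wT. \<forall>T\<in>elems_cont (\<alpha>, lo, hi, T0) k X. wT T \<in> NT (\<alpha>, lo, hi, T0) k T}
       \<subseteq> Collect (PP (mesh T0 k))"
  proof
    fix w assume "w \<in> {(\<lambda>x. \<Sum>T\<in>elems_cont (\<alpha>, lo, hi, T0) k X. wT T x) | wT. \<forall>T\<in>elems_cont (\<alpha>, lo, hi, T0) k X. wT T \<in> NT (\<alpha>, lo, hi, T0) k T}"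
    then obtain wT where w: "w = (\<lambda>x. \<Sum>T\<in>elems_cont (\<alpha>, lo, hi, T0) k X. wT T x)"
      and wT: "\<forall>T\<in>elems_cont (\<alpha>, lo, hi, T0) k X. wT T \<in> NT (\<alpha>, lo, hi, T0) k T" by blast
    have "PP (mesh T0 k) w" unfolding w
      by (rule PP_sum) (use wT NT_PP in blast)
    then show "w \<in> Collect (PP (mesh T0 k))" by simp
  qed
qed

lemma patch_Nk: "patch_space (\<alpha>, lo, hi, T0) k X \<subseteq> Nk (\<alpha>, lo, hi, T0) k"
  unfolding patch_eq by blast

lemma NP_cases: "\<exists>X. NP var (\<alpha>, lo, hi, T0) k P = patch_space (\<alpha>, lo, hi, T0) k X"
  by (cases var) (auto simp: NP_def NE_def NV_def)

lemma NP_sub: "fv.subspace (NP var (\<alpha>, lo, hi, T0) k P)"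
  using NP_cases[of var k P] patch_sub by metis
lemma NP_Nk: "NP var (\<alpha>, lo, hi, T0) k P \<subseteq> Nk (\<alpha>, lo, hi, T0) k"
  using NP_cases[of var k P] patch_Nk by metis
lemma NP_PP: "NP var (\<alpha>, lo, hi, T0) k P \<subseteq> Collect (PP (mesh T0 k))"
  using NP_Nk Nk_PP by blast

end



context amesh
begin

lemma a_cs:
  assumes w: "PP M w" and z: "PP M z" and t: "t > 0"
  shows "2 * a w z \<le> t * a w w + a z z / t"
proof -
  have tw: "PP M (sc t w)" by (rule PP_sc[OF w])
  have d: "PP M (sc t w - z)" by (rule PP_diff'[OF tw z])
  have "a (sc t w - z) (sc t w - z) = a (sc t w) (sc t w - z) - a z (sc t w - z)"
    by (rule a_diffL[OF tw z d])
  also have "a (sc t w) (sc t w - z) = t * a w (sc t w - z)" by (rule a_scL[OF w d])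
  also have "a w (sc t w - z) = a w (sc t w) - a w z" by (rule a_diffR[OF tw z w])
  also have "a w (sc t w) = t * a w w" by (rule a_scR[OF w w])
  also have "a z (sc t w - z) = a z (sc t w) - a z z" by (rule a_diffR[OF tw z z])
  also have "a z (sc t w) = t * a z w" by (rule a_scR[OF w z])
  also have "a z w = a w z" by (rule a_sym)
  finally have eq: "a (sc t w - z) (sc t w - z) = t * (t * a w w - a w z) - (t * a w z - a z z)" .
  have "0 \<le> a (sc t w - z) (sc t w - z)" by (rule a_nonneg[OF d])
  then have "2 * a w z * t \<le> (t * a w w + a z z / t) * t"
    unfolding eq using t by (simp add: algebra_simps power2_eq_square)
  then show ?thesis using t by (rule mult_right_le_imp_le) 
qed

end

context setting
begin

lemma Inj_eq: "Inj (\<alpha>, lo, hi, T0) k u = (\<lambda>x. if x \<in> \<Union>(obx ` mesh T0 k) then u x else 0)"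
  by (simp add: Inj_def)

lemma mesh_pred: "1 \<le> k \<Longrightarrow> mesh T0 k = refine (mesh T0 (k-1))"
  using mesh_Suc[of T0 "k-1"] by simp

lemma Inj_PP:
  assumes k: "1 \<le> k" and u: "PP (mesh T0 (k-1)) u"
  shows "PP (mesh T0 k) (Inj (\<alpha>, lo, hi, T0) k u)"
  unfolding PP_def Inj_eq
proof (intro conjI ballI allI impI)
  fix T' assume T': "T' \<in> mesh T0 k"
  then obtain T s where T: "T \<in> mesh T0 (k-1)" "T' = child T s" unfolding mesh_pred[OF k] refine_mem by blast
  from u T(1) obtain p where p: "p \<in> ned_polys" "\<forall>x\<in>obx T. u x = p x" unfolding PP_def by blast
  have "\<forall>x\<in>obx T'. (if x \<in> \<Union>(obx ` mesh T0 k) then u x else 0) = p x"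
  proof
    fix x assume x: "x \<in> obx T'"
    then have "x \<in> \<Union>(obx ` mesh T0 k)" using T' by blast
    moreover have "x \<in> obx T" using x T(2) child_obx by blast
    ultimately show "(if x \<in> \<Union>(obx ` mesh T0 k) then u x else 0) = p x" using p by simp
  qed
  with p(1) show "\<exists>p\<in>ned_polys. \<forall>x\<in>obx T'. (if x \<in> \<Union>(obx ` mesh T0 k) then u x else 0) = p x" by blast
next
  fix x assume "x \<notin> \<Union>(obx ` mesh T0 k)"
  then show "(if x \<in> \<Union>(obx ` mesh T0 k) then u x else 0) = 0" by simp
qed

lemma Inj_add: "Inj (\<alpha>, lo, hi, T0) k (u + w) = Inj (\<alpha>, lo, hi, T0) k u + Inj (\<alpha>, lo, hi, T0) k w"
  by (simp add: Inj_eq fun_eq_iff)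
lemma Inj_sc: "Inj (\<alpha>, lo, hi, T0) k (sc c u) = sc c (Inj (\<alpha>, lo, hi, T0) k u)"
  by (simp add: Inj_eq fun_eq_iff)

lemma Inj_local:
  assumes k: "1 \<le> k" and u: "PP (mesh T0 (k-1)) u" and x: "x \<notin> skel (mesh T0 k)"
  shows "Inj (\<alpha>, lo, hi, T0) k u x = u x \<and> curl (Inj (\<alpha>, lo, hi, T0) k u) x = curl u x"
proof (cases "\<exists>T\<in>mesh T0 k. x \<in> obx T")
  case True
  then obtain T where T: "T \<in> mesh T0 k" "x \<in> obx T" by blast
  from obx_open[of T] T(2) obtain e where e: "e > 0" "ball x e \<subseteq> obx T" by (rule openE)
  have "\<forall>y\<in>ball x e. Inj (\<alpha>, lo, hi, T0) k u y = u y"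
  proof
    fix y assume "y \<in> ball x e"
    then have "y \<in> \<Union>(obx ` mesh T0 k)" using e(2) T(1) by blast
    then show "Inj (\<alpha>, lo, hi, T0) k u y = u y" unfolding Inj_eq by simp
  qed
  moreover from this e(1) have "Inj (\<alpha>, lo, hi, T0) k u x = u x" by simp
  ultimately show ?thesis using curl_cong[OF e(1)] by blast
next
  case False
  have fin: "finite (mesh T0 k)" "finite (mesh T0 (k-1))" using gmeshD(1)[OF gmk] by auto
  have nx: "x \<notin> (\<Union>T\<in>mesh T0 k. cbx T)" using False x unfolding skel_def by blast
  have nd: "\<forall>T\<in>mesh T0 (k-1). nondeg T" using gmeshD(2)[OF gmk] by blast
  have "(\<Union>T\<in>mesh T0 k. cbx T) = (\<Union>T\<in>mesh T0 (k-1). cbx T)"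
    unfolding mesh_pred[OF k] by (rule cbx_refine[OF nd])
  with nx have nx2: "x \<notin> (\<Union>T\<in>mesh T0 (k-1). cbx T)" by simp
  show ?thesis using PP_out[OF fin(1) Inj_PP[OF k u] nx] PP_out[OF fin(2) u nx2] by simp
qed

lemma Inj_a:
  assumes k: "1 \<le> k" and u: "PP (mesh T0 (k-1)) u" and w: "PP (mesh T0 (k-1)) w"
  shows "aform \<alpha> lo hi (Inj (\<alpha>, lo, hi, T0) k u) (Inj (\<alpha>, lo, hi, T0) k w) = aform \<alpha> lo hi u w"
proof -
  have neg: "negligible (skel (mesh T0 k))" using negligible_skel gmeshD(1)[OF gmk] by blast
  have 1: "integral (box lo hi) (\<lambda>x. curl (Inj (\<alpha>, lo, hi, T0) k u) x \<bullet> curl (Inj (\<alpha>, lo, hi, T0) k w) x)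
     = integral (box lo hi) (\<lambda>x. curl u x \<bullet> curl w x)"
    by (rule integral_spike[OF neg]) (simp add: Inj_local[OF k u] Inj_local[OF k w])
  have 2: "integral (box lo hi) (\<lambda>x. Inj (\<alpha>, lo, hi, T0) k u x \<bullet> Inj (\<alpha>, lo, hi, T0) k w x)
     = integral (box lo hi) (\<lambda>x. u x \<bullet> w x)"
    by (rule integral_spike[OF neg]) (simp add: Inj_local[OF k u] Inj_local[OF k w])
  show ?thesis unfolding aform_def 1 2 ..
qed

lemma Ritz_spec:
  assumes k: "1 \<le> k" and v: "v \<in> Nk (\<alpha>, lo, hi, T0) k"
  shows "Ritz (\<alpha>, lo, hi, T0) k v \<in> Nk (\<alpha>, lo, hi, T0) (k-1) \<and>
    (\<forall>v'\<in>Nk (\<alpha>, lo, hi, T0) (k-1). aform \<alpha> lo hi (Ritz (\<alpha>, lo, hi, T0) k v) v' = aform \<alpha> lo hi v (Inj (\<alpha>, lo, hi, T0) k v'))"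
proof -
  interpret C: amesh \<alpha> lo hi "mesh T0 (k-1)" by (rule am)
  interpret F: amesh \<alpha> lo hi "mesh T0 k" by (rule am)
  have vP: "PP (mesh T0 k) v" using v Nk_PP by blast
  have lin: "linS (Nk (\<alpha>, lo, hi, T0) (k-1)) (\<lambda>v'. aform \<alpha> lo hi v (Inj (\<alpha>, lo, hi, T0) k v'))"
    unfolding linS_def
  proof (intro conjI ballI allI)
    fix x y assume x: "x \<in> Nk (\<alpha>, lo, hi, T0) (k-1)" and y: "y \<in> Nk (\<alpha>, lo, hi, T0) (k-1)"
    have xP: "PP (mesh T0 k) (Inj (\<alpha>, lo, hi, T0) k x)" using Inj_PP[OF k] x Nk_PP by blast
    have yP: "PP (mesh T0 k) (Inj (\<alpha>, lo, hi, T0) k y)" using Inj_PP[OF k] y Nk_PP by blast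
    show "aform \<alpha> lo hi v (Inj (\<alpha>, lo, hi, T0) k (x + y)) = aform \<alpha> lo hi v (Inj (\<alpha>, lo, hi, T0) k x) + aform \<alpha> lo hi v (Inj (\<alpha>, lo, hi, T0) k y)"
      unfolding Inj_add by (rule F.a_addR[OF xP yP vP])
  next
    fix c x assume x: "x \<in> Nk (\<alpha>, lo, hi, T0) (k-1)"
    have xP: "PP (mesh T0 k) (Inj (\<alpha>, lo, hi, T0) k x)" using Inj_PP[OF k] x Nk_PP by blast
    show "aform \<alpha> lo hi v (Inj (\<alpha>, lo, hi, T0) k (sc c x)) = c * aform \<alpha> lo hi v (Inj (\<alpha>, lo, hi, T0) k x)"
      unfolding Inj_sc by (rule F.a_scR[OF xP vP])
  qed
  have ex: "\<exists>!u. u \<in> Nk (\<alpha>, lo, hi, T0) (k-1) \<and> (\<forall>s\<in>Nk (\<alpha>, lo, hi, T0) (k-1). aform \<alpha> lo hi u s = aform \<alpha> lo hi v (Inj (\<alpha>, lo, hi, T0) k s))"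
    by (rule C.proj_exists[OF Nk_sub Nk_PP lin])
  show ?thesis unfolding Ritz_def ak_eq by (rule theI'[OF ex])
qed

lemma Ainv_spec:
  assumes S: "fv.subspace S" "S \<subseteq> Nk (\<alpha>, lo, hi, T0) k" and v: "v \<in> Nk (\<alpha>, lo, hi, T0) k"
  shows "AinvS (\<alpha>, lo, hi, T0) S (Jt S (Aop (\<alpha>, lo, hi, T0) k v)) \<in> S \<and>
     (\<forall>s\<in>S. aform \<alpha> lo hi (AinvS (\<alpha>, lo, hi, T0) S (Jt S (Aop (\<alpha>, lo, hi, T0) k v))) s = aform \<alpha> lo hi v s)"
proof -
  interpret F: amesh \<alpha> lo hi "mesh T0 k" by (rule am)
  have vP: "PP (mesh T0 k) v" using v Nk_PP by blast
  have SP: "S \<subseteq> Collect (PP (mesh T0 k))" using S(2) Nk_PP by blast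
  have lin: "linS S (\<lambda>s. aform \<alpha> lo hi v s)" by (rule F.linS_a[OF vP SP])
  have ex: "\<exists>!u. u \<in> S \<and> (\<forall>s\<in>S. aform \<alpha> lo hi u s = aform \<alpha> lo hi v s)"
    by (rule F.proj_exists[OF S(1) SP lin])
  have eqP: "(\<lambda>u. u \<in> S \<and> (\<forall>s\<in>S. ak (\<alpha>, lo, hi, T0) u s = Jt S (Aop (\<alpha>, lo, hi, T0) k v) s))
      = (\<lambda>u. u \<in> S \<and> (\<forall>s\<in>S. aform \<alpha> lo hi u s = aform \<alpha> lo hi v s))"
  proof (rule ext)
    fix u
    have "\<forall>s\<in>S. Jt S (Aop (\<alpha>, lo, hi, T0) k v) s = aform \<alpha> lo hi v s"
      using S(2) by (auto simp: Jt_def Aop_def ak_eq)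
    then show "(u \<in> S \<and> (\<forall>s\<in>S. ak (\<alpha>, lo, hi, T0) u s = Jt S (Aop (\<alpha>, lo, hi, T0) k v) s))
      = (u \<in> S \<and> (\<forall>s\<in>S. aform \<alpha> lo hi u s = aform \<alpha> lo hi v s))" by (simp add: ak_eq)
  qed
  show ?thesis unfolding AinvS_def eqP by (rule theI'[OF ex])
qed

end



context setting
begin

lemma sd_get:
  assumes sd: "stable_decomp var (\<alpha>, lo, hi, T0) C" and k: "1 \<le> k" and v: "v \<in> Nk (\<alpha>, lo, hi, T0) k"
  shows "\<exists>wT wP. (\<forall>T\<in>mesh T0 (k-1). wT T \<in> NT (\<alpha>, lo, hi, T0) k T) \<and>
     (\<forall>P\<in>patches var (\<alpha>, lo, hi, T0) k. wP P \<in> NP var (\<alpha>, lo, hi, T0) k P) \<and>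
     (\<lambda>x. v x - Inj (\<alpha>, lo, hi, T0) k (Ritz (\<alpha>, lo, hi, T0) k v) x) = (\<lambda>x. (\<Sum>T\<in>mesh T0 (k-1). wT T x) + (\<Sum>P\<in>patches var (\<alpha>, lo, hi, T0) k. wP P x)) \<and>
     (\<Sum>T\<in>mesh T0 (k-1). aform \<alpha> lo hi (wT T) (wT T)) + (\<Sum>P\<in>patches var (\<alpha>, lo, hi, T0) k. aform \<alpha> lo hi (wP P) (wP P))
       \<le> C * aform \<alpha> lo hi (\<lambda>x. v x - Inj (\<alpha>, lo, hi, T0) k (Ritz (\<alpha>, lo, hi, T0) k v) x) (\<lambda>x. v x - Inj (\<alpha>, lo, hi, T0) k (Ritz (\<alpha>, lo, hi, T0) k v) x)"
proof -
  have H: "\<forall>k\<ge>1. \<forall>w \<in> {(\<lambda>x. v x - Inj (\<alpha>, lo, hi, T0) k (Ritz (\<alpha>, lo, hi, T0) k v) x) | v. v \<in> Nk (\<alpha>, lo, hi, T0) k}.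
        \<exists>wT wP. (\<forall>T\<in>mesh T0 (k-1). wT T \<in> NT (\<alpha>, lo, hi, T0) k T) \<and>
                (\<forall>P\<in>patches var (\<alpha>, lo, hi, T0) k. wP P \<in> NP var (\<alpha>, lo, hi, T0) k P) \<and>
                w = (\<lambda>x. (\<Sum>T\<in>mesh T0 (k-1). wT T x) + (\<Sum>P\<in>patches var (\<alpha>, lo, hi, T0) k. wP P x)) \<and>
                (\<Sum>T\<in>mesh T0 (k-1). aform \<alpha> lo hi (wT T) (wT T)) + (\<Sum>P\<in>patches var (\<alpha>, lo, hi, T0) k. aform \<alpha> lo hi (wP P) (wP P))
                  \<le> C * aform \<alpha> lo hi w w"
    using sd unfolding stable_decomp_def ak_eq by simp
  have mem: "(\<lambda>x. v x - Inj (\<alpha>, lo, hi, T0) k (Ritz (\<alpha>, lo, hi, T0) k v) x) \<in> {(\<lambda>x. v x - Inj (\<alpha>, lo, hi, T0) k (Ritz (\<alpha>, lo, hi, T0) k v) x) | v. v \<in> Nk (\<alpha>, lo, hi, T0) k}"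
    using v by blast
  show ?thesis using H[rule_format, OF k mem] .
qed

lemma d_PP:
  assumes k: "1 \<le> k" and v: "v \<in> Nk (\<alpha>, lo, hi, T0) k"
  shows "PP (mesh T0 k) (\<lambda>x. v x - Inj (\<alpha>, lo, hi, T0) k (Ritz (\<alpha>, lo, hi, T0) k v) x)"
proof -
  have "Ritz (\<alpha>, lo, hi, T0) k v \<in> Nk (\<alpha>, lo, hi, T0) (k-1)" using Ritz_spec[OF k v] by blast
  then have "PP (mesh T0 (k-1)) (Ritz (\<alpha>, lo, hi, T0) k v)" using Nk_PP by blast
  then have "PP (mesh T0 k) (Inj (\<alpha>, lo, hi, T0) k (Ritz (\<alpha>, lo, hi, T0) k v))" by (rule Inj_PP[OF k])
  moreover have "PP (mesh T0 k) v" using v Nk_PP by blast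
  ultimately show ?thesis by (intro PP_diff)
qed

lemma d_zero:
  assumes sd: "stable_decomp var (\<alpha>, lo, hi, T0) C" and C: "C < 0" and k: "1 \<le> k" and v: "v \<in> Nk (\<alpha>, lo, hi, T0) k"
  shows "v x - Inj (\<alpha>, lo, hi, T0) k (Ritz (\<alpha>, lo, hi, T0) k v) x = 0"
proof -
  interpret F: amesh \<alpha> lo hi "mesh T0 k" by (rule am)
  define d where "d = (\<lambda>x. v x - Inj (\<alpha>, lo, hi, T0) k (Ritz (\<alpha>, lo, hi, T0) k v) x)"
  have dP: "PP (mesh T0 k) d" unfolding d_def by (rule d_PP[OF k v])
  obtain wT wP where wT: "\<forall>T\<in>mesh T0 (k-1). wT T \<in> NT (\<alpha>, lo, hi, T0) k T"
    and wP: "\<forall>P\<in>patches var (\<alpha>, lo, hi, T0) k. wP P \<in> NP var (\<alpha>, lo, hi, T0) k P"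
    and le: "(\<Sum>T\<in>mesh T0 (k-1). aform \<alpha> lo hi (wT T) (wT T)) + (\<Sum>P\<in>patches var (\<alpha>, lo, hi, T0) k. aform \<alpha> lo hi (wP P) (wP P))
       \<le> C * aform \<alpha> lo hi d d"
    using sd_get[OF sd k v] unfolding d_def by blast
  have "0 \<le> (\<Sum>T\<in>mesh T0 (k-1). aform \<alpha> lo hi (wT T) (wT T))"
  proof (rule sum_nonneg)
    fix T assume "T \<in> mesh T0 (k-1)"
    then have "PP (mesh T0 k) (wT T)" using wT NT_PP by blast
    then show "0 \<le> aform \<alpha> lo hi (wT T) (wT T)" by (rule F.a_nonneg)
  qed
  moreover have "0 \<le> (\<Sum>P\<in>patches var (\<alpha>, lo, hi, T0) k. aform \<alpha> lo hi (wP P) (wP P))"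
  proof (rule sum_nonneg)
    fix P assume "P \<in> patches var (\<alpha>, lo, hi, T0) k"
    then have "PP (mesh T0 k) (wP P)" using wP NP_PP by blast
    then show "0 \<le> aform \<alpha> lo hi (wP P) (wP P)" by (rule F.a_nonneg)
  qed
  ultimately have "0 \<le> C * aform \<alpha> lo hi d d" using le by linarith
  moreover have "0 \<le> aform \<alpha> lo hi d d" by (rule F.a_nonneg[OF dP])
  moreover have "C * aform \<alpha> lo hi d d \<le> 0" using C \<open>0 \<le> aform \<alpha> lo hi d d\<close> by (intro mult_nonpos_nonneg) auto
  ultimately have "C * aform \<alpha> lo hi d d = 0" by linarith
  then have "aform \<alpha> lo hi d d = 0" using C by simp
  then have "d = 0" by (rule F.a_def0[OF dP])
  then have "d x = 0" by simp
  then show ?thesis unfolding d_def by simp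
qed

end



context setting
begin

lemma main_core:
  assumes k: "1 \<le> k" and v: "v \<in> Nk (\<alpha>, lo, hi, T0) k" and eta: "0 < \<eta>"
    and sd: "stable_decomp var (\<alpha>, lo, hi, T0) C" and C: "0 \<le> C"
  shows "aform \<alpha> lo hi (\<lambda>x. v x - Inj (\<alpha>, lo, hi, T0) k (Ritz (\<alpha>, lo, hi, T0) k v) x) (\<lambda>x. v x - Inj (\<alpha>, lo, hi, T0) k (Ritz (\<alpha>, lo, hi, T0) k v) x)
         \<le> (C / \<eta>) * aform \<alpha> lo hi (\<lambda>x. v x - Rk var \<eta> (\<alpha>, lo, hi, T0) k v x) v"
proof -
  interpret F: amesh \<alpha> lo hi "mesh T0 k" by (rule am)
  define A where "A = mesh T0 (k-1)"
  define Q where "Q = patches var (\<alpha>, lo, hi, T0) k"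
  define R where "R = Ritz (\<alpha>, lo, hi, T0) k v"
  define IR where "IR = Inj (\<alpha>, lo, hi, T0) k R"
  define d where "d = (\<lambda>x. v x - IR x)"
  have RN: "R \<in> Nk (\<alpha>, lo, hi, T0) (k-1)" and Rp: "\<forall>v'\<in>Nk (\<alpha>, lo, hi, T0) (k-1). aform \<alpha> lo hi R v' = aform \<alpha> lo hi v (Inj (\<alpha>, lo, hi, T0) k v')"
    using Ritz_spec[OF k v] unfolding R_def by blast+
  have RP: "PP (mesh T0 (k-1)) R" using RN Nk_PP by blast
  have IRP: "PP (mesh T0 k) IR" unfolding IR_def by (rule Inj_PP[OF k RP])
  have vP: "PP (mesh T0 k) v" using v Nk_PP by blast
  have dfun: "d = v - IR" by (simp add: d_def fun_eq_iff)
  have dP: "PP (mesh T0 k) d" unfolding dfun by (rule PP_diff'[OF vP IRP])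
  have dIR: "aform \<alpha> lo hi d IR = 0"
  proof -
    have "aform \<alpha> lo hi d IR = aform \<alpha> lo hi v IR - aform \<alpha> lo hi IR IR"
      unfolding dfun by (rule F.a_diffL[OF vP IRP IRP])
    also have "aform \<alpha> lo hi IR IR = aform \<alpha> lo hi R R" unfolding IR_def by (rule Inj_a[OF k RP RP])
    also have "aform \<alpha> lo hi R R = aform \<alpha> lo hi v IR" unfolding IR_def using Rp RN by blast
    finally show ?thesis by simp
  qed
  have ddv: "aform \<alpha> lo hi d d = aform \<alpha> lo hi d v"
  proof -
    have "aform \<alpha> lo hi d d = aform \<alpha> lo hi d v - aform \<alpha> lo hi d IR"
      by (subst (2) dfun) (rule F.a_diffR[OF vP IRP dP])
    then show ?thesis using dIR by simp
  qed
  obtain wT wP where wT: "\<forall>T\<in>A. wT T \<in> NT (\<alpha>, lo, hi, T0) k T"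
    and wP: "\<forall>P\<in>Q. wP P \<in> NP var (\<alpha>, lo, hi, T0) k P"
    and dsum0: "d = (\<lambda>x. (\<Sum>T\<in>A. wT T x) + (\<Sum>P\<in>Q. wP P x))"
    and Xle: "(\<Sum>T\<in>A. aform \<alpha> lo hi (wT T) (wT T)) + (\<Sum>P\<in>Q. aform \<alpha> lo hi (wP P) (wP P)) \<le> C * aform \<alpha> lo hi d d"
    using sd_get[OF sd k v] unfolding d_def IR_def R_def A_def Q_def by blast
  have wTP: "PP (mesh T0 k) (wT T)" if "T \<in> A" for T using wT that NT_PP by blast
  have wPP: "PP (mesh T0 k) (wP P)" if "P \<in> Q" for P using wP that NP_PP by blast
  have dsum: "d = (\<Sum>T\<in>A. wT T) + (\<Sum>P\<in>Q. wP P)" unfolding dsum0 by (simp add: fun_eq_iff sum_fun_app)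
  define PT where "PT T = AinvS (\<alpha>, lo, hi, T0) (NT (\<alpha>, lo, hi, T0) k T) (Jt (NT (\<alpha>, lo, hi, T0) k T) (Aop (\<alpha>, lo, hi, T0) k v))" for T
  define PQ where "PQ P = AinvS (\<alpha>, lo, hi, T0) (NP var (\<alpha>, lo, hi, T0) k P) (Jt (NP var (\<alpha>, lo, hi, T0) k P) (Aop (\<alpha>, lo, hi, T0) k v))" for P
  have PTs: "PT T \<in> NT (\<alpha>, lo, hi, T0) k T \<and> (\<forall>s\<in>NT (\<alpha>, lo, hi, T0) k T. aform \<alpha> lo hi (PT T) s = aform \<alpha> lo hi v s)" for T
    unfolding PT_def by (rule Ainv_spec[OF NT_sub NT_Nk v])
  have PQs: "PQ P \<in> NP var (\<alpha>, lo, hi, T0) k P \<and> (\<forall>s\<in>NP var (\<alpha>, lo, hi, T0) k P. aform \<alpha> lo hi (PQ P) s = aform \<alpha> lo hi v s)" for P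
    unfolding PQ_def by (rule Ainv_spec[OF NP_sub NP_Nk v])
  have PTP: "PP (mesh T0 k) (PT T)" for T using PTs NT_PP by blast
  have PQP: "PP (mesh T0 k) (PQ P)" for P using PQs NP_PP by blast
  have IdR: "(\<lambda>x. v x - Rk var \<eta> (\<alpha>, lo, hi, T0) k v x) = sc \<eta> ((\<Sum>T\<in>A. PT T) + (\<Sum>P\<in>Q. PQ P))"
    by (simp add: Rk_def Minv_def fun_eq_iff sum_fun_app PT_def PQ_def A_def Q_def)
  have sTP: "PP (mesh T0 k) (\<Sum>T\<in>A. PT T)" by (rule F.PP_sum'[OF PTP])
  have sQP: "PP (mesh T0 k) (\<Sum>P\<in>Q. PQ P)" by (rule F.PP_sum'[OF PQP])
  define Y where "Y = (\<Sum>T\<in>A. aform \<alpha> lo hi (PT T) v) + (\<Sum>P\<in>Q. aform \<alpha> lo hi (PQ P) v)"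
  define X where "X = (\<Sum>T\<in>A. aform \<alpha> lo hi (wT T) (wT T)) + (\<Sum>P\<in>Q. aform \<alpha> lo hi (wP P) (wP P))"
  have aIdR: "aform \<alpha> lo hi (\<lambda>x. v x - Rk var \<eta> (\<alpha>, lo, hi, T0) k v x) v = \<eta> * Y"
  proof -
    have "aform \<alpha> lo hi (sc \<eta> ((\<Sum>T\<in>A. PT T) + (\<Sum>P\<in>Q. PQ P))) v = \<eta> * aform \<alpha> lo hi ((\<Sum>T\<in>A. PT T) + (\<Sum>P\<in>Q. PQ P)) v"
      by (rule F.a_scL[OF PP_add'[OF sTP sQP] vP])
    also have "aform \<alpha> lo hi ((\<Sum>T\<in>A. PT T) + (\<Sum>P\<in>Q. PQ P)) v = aform \<alpha> lo hi (\<Sum>T\<in>A. PT T) v + aform \<alpha> lo hi (\<Sum>P\<in>Q. PQ P) v"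
      by (rule F.a_addL[OF sTP sQP vP])
    also have "aform \<alpha> lo hi (\<Sum>T\<in>A. PT T) v = (\<Sum>T\<in>A. aform \<alpha> lo hi (PT T) v)" by (rule F.a_sumL[OF PTP vP])
    also have "aform \<alpha> lo hi (\<Sum>P\<in>Q. PQ P) v = (\<Sum>P\<in>Q. aform \<alpha> lo hi (PQ P) v)" by (rule F.a_sumL[OF PQP vP])
    finally show ?thesis unfolding IdR Y_def .
  qed
  have yT: "aform \<alpha> lo hi (PT T) (PT T) = aform \<alpha> lo hi (PT T) v" for T
    using PTs[of T] F.a_sym by metis
  have yQ: "aform \<alpha> lo hi (PQ P) (PQ P) = aform \<alpha> lo hi (PQ P) v" for P
    using PQs[of P] F.a_sym by metis
  have Y0: "0 \<le> Y" unfolding Y_def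
    using yT yQ F.a_nonneg[OF PTP] F.a_nonneg[OF PQP] by (simp add: sum_nonneg add_nonneg_nonneg)
  have key: "2 * aform \<alpha> lo hi d d \<le> t * X + Y / t" if t: "t > 0" for t
  proof -
    have "aform \<alpha> lo hi d d = aform \<alpha> lo hi d v" by (rule ddv)
    also have "\<dots> = aform \<alpha> lo hi (\<Sum>T\<in>A. wT T) v + aform \<alpha> lo hi (\<Sum>P\<in>Q. wP P) v"
      unfolding dsum by (rule F.a_addL[OF F.PP_sum'[OF wTP] F.PP_sum'[OF wPP] vP])
    also have "aform \<alpha> lo hi (\<Sum>T\<in>A. wT T) v = (\<Sum>T\<in>A. aform \<alpha> lo hi (wT T) v)" by (rule F.a_sumL[OF wTP vP])
    also have "aform \<alpha> lo hi (\<Sum>P\<in>Q. wP P) v = (\<Sum>P\<in>Q. aform \<alpha> lo hi (wP P) v)" by (rule F.a_sumL[OF wPP vP])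
    finally have dd: "aform \<alpha> lo hi d d = (\<Sum>T\<in>A. aform \<alpha> lo hi (wT T) v) + (\<Sum>P\<in>Q. aform \<alpha> lo hi (wP P) v)" .
    have eT: "2 * aform \<alpha> lo hi (wT T) v \<le> t * aform \<alpha> lo hi (wT T) (wT T) + aform \<alpha> lo hi (PT T) v / t" if T: "T \<in> A" for T
    proof -
      have "aform \<alpha> lo hi (PT T) (wT T) = aform \<alpha> lo hi v (wT T)" using PTs[of T] wT T by blast
      then have "aform \<alpha> lo hi (wT T) v = aform \<alpha> lo hi (wT T) (PT T)" using F.a_sym by metis
      moreover have "2 * aform \<alpha> lo hi (wT T) (PT T) \<le> t * aform \<alpha> lo hi (wT T) (wT T) + aform \<alpha> lo hi (PT T) (PT T) / t"
        by (rule F.a_cs[OF wTP[OF T] PTP t])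
      ultimately show ?thesis using yT by simp
    qed
    have eQ: "2 * aform \<alpha> lo hi (wP P) v \<le> t * aform \<alpha> lo hi (wP P) (wP P) + aform \<alpha> lo hi (PQ P) v / t" if P: "P \<in> Q" for P
    proof -
      have "aform \<alpha> lo hi (PQ P) (wP P) = aform \<alpha> lo hi v (wP P)" using PQs[of P] wP P by blast
      then have "aform \<alpha> lo hi (wP P) v = aform \<alpha> lo hi (wP P) (PQ P)" using F.a_sym by metis
      moreover have "2 * aform \<alpha> lo hi (wP P) (PQ P) \<le> t * aform \<alpha> lo hi (wP P) (wP P) + aform \<alpha> lo hi (PQ P) (PQ P) / t"
        by (rule F.a_cs[OF wPP[OF P] PQP t])
      ultimately show ?thesis using yQ by simp
    qed
    have sT: "(\<Sum>T\<in>A. 2 * aform \<alpha> lo hi (wT T) v) \<le> (\<Sum>T\<in>A. t * aform \<alpha> lo hi (wT T) (wT T) + aform \<alpha> lo hi (PT T) v / t)"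
      by (rule sum_mono) (rule eT)
    have sQ: "(\<Sum>P\<in>Q. 2 * aform \<alpha> lo hi (wP P) v) \<le> (\<Sum>P\<in>Q. t * aform \<alpha> lo hi (wP P) (wP P) + aform \<alpha> lo hi (PQ P) v / t)"
      by (rule sum_mono) (rule eQ)
    have "2 * aform \<alpha> lo hi d d = (\<Sum>T\<in>A. 2 * aform \<alpha> lo hi (wT T) v) + (\<Sum>P\<in>Q. 2 * aform \<alpha> lo hi (wP P) v)"
      unfolding dd by (simp add: sum_distrib_left algebra_simps)
    also have "\<dots> \<le> (\<Sum>T\<in>A. t * aform \<alpha> lo hi (wT T) (wT T) + aform \<alpha> lo hi (PT T) v / t) + (\<Sum>P\<in>Q. t * aform \<alpha> lo hi (wP P) (wP P) + aform \<alpha> lo hi (PQ P) v / t)"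
      using sT sQ by (rule add_mono)
    also have "\<dots> = t * X + Y / t"
      unfolding X_def Y_def by (simp add: sum.distrib sum_distrib_left sum_divide_distrib add_divide_distrib algebra_simps)
    finally show ?thesis .
  qed
  have D0: "0 \<le> aform \<alpha> lo hi d d" by (rule F.a_nonneg[OF dP])
  have XC: "X \<le> C * aform \<alpha> lo hi d d" using Xle unfolding X_def .
  have main: "aform \<alpha> lo hi d d \<le> C * Y"
  proof (cases "C = 0")
    case False
    with C have Cp: "C > 0" by simp
    have "2 * aform \<alpha> lo hi d d \<le> (1/C) * X + Y / (1/C)" using key[of "1/C"] Cp by simp
    also have "(1/C) * X \<le> (1/C) * (C * aform \<alpha> lo hi d d)" using XC Cp by (intro mult_left_mono) auto
    also have "(1/C) * (C * aform \<alpha> lo hi d d) = aform \<alpha> lo hi d d" using Cp by simp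
    also have "Y / (1/C) = C * Y" by simp
    finally show ?thesis by simp
  next
    case True
    then have X0: "X \<le> 0" using XC by simp
    show ?thesis
    proof (rule ccontr)
      assume "\<not> aform \<alpha> lo hi d d \<le> C * Y"
      then have Dp: "aform \<alpha> lo hi d d > 0" using True by simp
      define t where "t = (Y + 1) / aform \<alpha> lo hi d d"
      have tp: "t > 0" using Dp Y0 by (simp add: t_def)
      have "2 * aform \<alpha> lo hi d d \<le> t * X + Y / t" by (rule key[OF tp])
      also have "t * X \<le> 0" using tp X0 by (simp add: mult_nonneg_nonpos)
      also have "Y / t = Y * aform \<alpha> lo hi d d / (Y + 1)" using Dp Y0 by (simp add: t_def)
      also have "\<dots> \<le> aform \<alpha> lo hi d d"
        using Dp Y0 by (simp add: divide_le_eq)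
      finally show False using Dp by simp
    qed
  qed
  have "(C / \<eta>) * aform \<alpha> lo hi (\<lambda>x. v x - Rk var \<eta> (\<alpha>, lo, hi, T0) k v x) v = C * Y"
    unfolding aIdR using eta by simp
  with main show ?thesis unfolding d_def IR_def R_def by simp
qed

end



definition hh :: "bx \<Rightarrow> 3 \<Rightarrow> real" where "hh T i = (snd T $ i - fst T $ i) / 2"
definition mm :: "bx \<Rightarrow> 3 \<Rightarrow> real" where "mm T i = (fst T $ i + snd T $ i) / 2"
definition dl :: "bx \<Rightarrow> (3 \<Rightarrow> bool) \<Rightarrow> 3 \<Rightarrow> real" where
  "dl T s i = (if s i then - 1 / hh T i else 1 / hh T i)"
definition ea :: "bx \<Rightarrow> (3 \<Rightarrow> bool) \<Rightarrow> 3 \<Rightarrow> real" where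
  "ea T s i = (if s i then snd T $ i / hh T i else - fst T $ i / hh T i)"
definition ell :: "bx \<Rightarrow> (3 \<Rightarrow> bool) \<Rightarrow> 3 \<Rightarrow> real \<Rightarrow> real" where
  "ell T s i t = ea T s i + dl T s i * t"
definition qq :: "bx \<Rightarrow> (3 \<Rightarrow> bool) \<Rightarrow> pt \<Rightarrow> real" where
  "qq T s x = ell T s 1 (x$1) * ell T s 2 (x$2) * ell T s 3 (x$3)"
definition GG :: "bx \<Rightarrow> (3 \<Rightarrow> bool) \<Rightarrow> pt \<Rightarrow> real^3" where
  "GG T s x = vector [dl T s 1 * ell T s 2 (x$2) * ell T s 3 (x$3),
                      dl T s 2 * ell T s 3 (x$3) * ell T s 1 (x$1),
                      dl T s 3 * ell T s 1 (x$1) * ell T s 2 (x$2)]"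
definition fac :: "bx \<Rightarrow> 3 \<Rightarrow> real \<Rightarrow> real" where
  "fac T i t = max 0 (1 - \<bar>t - mm T i\<bar> / hh T i)"
definition Phi :: "bx \<Rightarrow> pt \<Rightarrow> real" where
  "Phi T x = fac T 1 (x$1) * fac T 2 (x$2) * fac T 3 (x$3)"

definition v4 :: "real \<Rightarrow> real \<Rightarrow> real \<Rightarrow> real \<Rightarrow> real^4" where
  "v4 c1 c2 c3 c4 = (\<chi> l. if l = 1 then c1 else if l = 2 then c2 else if l = 3 then c3 else c4)"

lemma v4_comp [simp]: "v4 c1 c2 c3 c4 $ 1 = c1" "v4 c1 c2 c3 c4 $ 2 = c2" "v4 c1 c2 c3 c4 $ 3 = c3" "v4 c1 c2 c3 c4 $ 4 = c4"
  by (simp_all add: v4_def)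

lemma GG_ned: "GG T s \<in> ned_polys"
proof -
  let ?a = "v4 (dl T s 1 * ea T s 2 * ea T s 3) (dl T s 1 * dl T s 2 * ea T s 3) (dl T s 1 * ea T s 2 * dl T s 3) (dl T s 1 * dl T s 2 * dl T s 3)"
  let ?b = "v4 (dl T s 2 * ea T s 3 * ea T s 1) (dl T s 2 * dl T s 3 * ea T s 1) (dl T s 2 * ea T s 3 * dl T s 1) (dl T s 2 * dl T s 3 * dl T s 1)"
  let ?c = "v4 (dl T s 3 * ea T s 1 * ea T s 2) (dl T s 3 * dl T s 1 * ea T s 2) (dl T s 3 * ea T s 1 * dl T s 2) (dl T s 3 * dl T s 1 * dl T s 2)"
  have "GG T s = ned_poly ?a ?b ?c"
    by (simp add: fun_eq_iff vec_eq_iff forall_3 GG_def ned_poly_comp ell_def algebra_simps)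
  then show ?thesis unfolding ned_polys_def by blast
qed

lemma qq_line: "qq T s (x + t *\<^sub>R axis j 1) = qq T s x + t * GG T s x $ j"
  by (cases j rule: cases3) (simp_all add: qq_def GG_def ell_def axis3 algebra_simps)

lemma fac_lo:
  assumes h: "0 < hh T i" and y: "fst T $ i \<le> y" "y \<le> mm T i"
  shows "fac T i y = ell T (\<lambda>_. False) i y"
proof -
  have "\<bar>y - mm T i\<bar> = mm T i - y" using y by simp
  moreover have "mm T i - hh T i = fst T $ i" by (simp add: mm_def hh_def field_simps)
  ultimately have "1 - \<bar>y - mm T i\<bar> / hh T i = (y - fst T $ i) / hh T i"
    using h by (simp add: field_simps)
  moreover have "0 \<le> (y - fst T $ i) / hh T i" using h y by simp
  ultimately show ?thesis unfolding fac_def ell_def ea_def dl_def using h by (simp add: field_simps)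
qed

lemma fac_hi:
  assumes h: "0 < hh T i" and y: "mm T i \<le> y" "y \<le> snd T $ i"
  shows "fac T i y = ell T (\<lambda>_. True) i y"
proof -
  have "\<bar>y - mm T i\<bar> = y - mm T i" using y by simp
  moreover have "mm T i + hh T i = snd T $ i" by (simp add: mm_def hh_def field_simps)
  ultimately have "1 - \<bar>y - mm T i\<bar> / hh T i = (snd T $ i - y) / hh T i"
    using h by (simp add: field_simps)
  moreover have "0 \<le> (snd T $ i - y) / hh T i" using h y by simp
  ultimately show ?thesis unfolding fac_def ell_def ea_def dl_def using h by (simp add: field_simps)
qed

lemma ell_s: "ell T s i y = (if s i then ell T (\<lambda>_. True) i y else ell T (\<lambda>_. False) i y)"
  by (simp add: ell_def ea_def dl_def)

lemma hh_pos: "nondeg T \<Longrightarrow> 0 < hh T i"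
  unfolding nondeg_def hh_def by simp

lemma fac_child:
  assumes nd: "nondeg T" and y: "y \<in> cbx (child T s)"
  shows "fac T i (y $ i) = ell T s i (y $ i)"
proof -
  have h: "0 < hh T i" by (rule hh_pos[OF nd])
  have yi: "fst (child T s) $ i \<le> y $ i \<and> y $ i \<le> snd (child T s) $ i" using y unfolding mem_cbx by blast
  show ?thesis
  proof (cases "s i")
    case True
    then have "mm T i \<le> y $ i" "y $ i \<le> snd T $ i" using yi unfolding child_comp mm_def by auto
    then show ?thesis using fac_hi[OF h] True ell_s[of T s i] by simp
  next
    case False
    then have "fst T $ i \<le> y $ i" "y $ i \<le> mm T i" using yi unfolding child_comp mm_def by auto
    then show ?thesis using fac_lo[OF h] False ell_s[of T s i] by simp
  qed
qed

lemma Phi_child: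
  assumes nd: "nondeg T" and y: "y \<in> cbx (child T s)"
  shows "Phi T y = qq T s y"
  unfolding Phi_def qq_def using fac_child[OF nd y] by simp

lemma Phi_out:
  assumes nd: "nondeg T" and y: "y \<notin> obx T"
  shows "Phi T y = 0"
proof -
  from y obtain i where i: "\<not> (fst T $ i < y $ i \<and> y $ i < snd T $ i)" unfolding mem_obx by blast
  have h: "0 < hh T i" by (rule hh_pos[OF nd])
  have "hh T i \<le> \<bar>y $ i - mm T i\<bar>" using i h by (auto simp: abs_if hh_def mm_def field_simps)
  then have "1 - \<bar>y $ i - mm T i\<bar> / hh T i \<le> 0" using h by (simp add: field_simps)
  then have "fac T i (y $ i) = 0" unfolding fac_def by simp
  then show ?thesis unfolding Phi_def by (cases i rule: cases3) simp_all
qed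



definition vstar :: "bx set \<Rightarrow> bx \<Rightarrow> vf" where
  "vstar M T x = (if x \<in> \<Union>(obx ` M) \<and> x \<in> obx T then GG T (\<lambda>i. mm T i \<le> x $ i) x else 0)"

lemma fdim2_other:
  assumes f: "fdim F = 2" and i: "fst F $ i = snd F $ i" and j: "j \<noteq> i" and le: "\<forall>l. fst F $ l \<le> snd F $ l"
  shows "fst F $ j < snd F $ j"
proof -
  let ?S = "{l. fst F $ l < snd F $ l}"
  have sub: "?S \<subseteq> UNIV - {i}" using i by auto
  have c1: "card ?S = 2" using f unfolding fdim_def .
  have c2: "card (UNIV - {i} :: 3 set) = 2" by (simp add: card_Diff_singleton)
  have "?S = UNIV - {i}" by (rule card_subset_eq) (use sub c1 c2 in auto)
  then show ?thesis using j by auto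
qed

lemma tang:
  assumes L1: "\<forall>x t. Q1 (x + t *\<^sub>R axis j 1) = Q1 x + t * G1 x $ j"
    and L2: "\<forall>x t. Q2 (x + t *\<^sub>R axis j 1) = Q2 x + t * G2 x $ j"
    and f: "fdim F = 2" and i: "fst F $ i = snd F $ i" and j: "j \<noteq> i" and le: "\<forall>l. fst F $ l \<le> snd F $ l"
    and x: "x \<in> cbx F" and eq: "\<forall>y\<in>cbx F. Q1 y = Q2 y"
  shows "G1 x $ j = G2 x $ j"
proof -
  have lt: "fst F $ j < snd F $ j" by (rule fdim2_other[OF f i j le])
  define \<delta> where "\<delta> = (if x $ j < snd F $ j then snd F $ j - x $ j else fst F $ j - x $ j)"
  have xj: "fst F $ j \<le> x $ j" "x $ j \<le> snd F $ j" using x unfolding mem_cbx by auto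
  have d0: "\<delta> \<noteq> 0" unfolding \<delta>_def using lt xj by auto
  have y: "x + \<delta> *\<^sub>R axis j 1 \<in> cbx F"
    unfolding mem_cbx
  proof
    fix l
    show "fst F $ l \<le> (x + \<delta> *\<^sub>R axis j 1) $ l \<and> (x + \<delta> *\<^sub>R axis j 1) $ l \<le> snd F $ l"
    proof (cases "l = j")
      case True
      then show ?thesis unfolding \<delta>_def using lt xj by (auto simp: axis3)
    next
      case False
      then show ?thesis using x unfolding mem_cbx by (auto simp: axis3)
    qed
  qed
  have "Q1 x + \<delta> * G1 x $ j = Q2 x + \<delta> * G2 x $ j"
    using L1 L2 eq y x by metis
  moreover have "Q1 x = Q2 x" using eq x by blast
  ultimately have "\<delta> * G1 x $ j = \<delta> * G2 x $ j" by simp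
  then show ?thesis using d0 by simp
qed

context setting
begin

lemma mesh1: "mesh T0 1 = refine T0"
  using mesh_Suc[of T0 0] mesh_0[of T0] by simp

lemma T0_gm: "gmesh lo hi T0" using gmk[of 0] mesh_0[of T0] by simp

lemma vs_child:
  assumes T: "T \<in> T0" and x: "x \<in> obx (child T s)"
  shows "vstar (refine T0) T x = GG T s x"
proof -
  have "child T s \<in> refine T0" unfolding refine_mem using T by blast
  then have "x \<in> \<Union>(obx ` refine T0)" using x by blast
  moreover have "x \<in> obx T" using x child_obx by blast
  moreover have "(\<lambda>i. mm T i \<le> x $ i) = s"
  proof
    fix i
    have "fst (child T s) $ i < x $ i \<and> x $ i < snd (child T s) $ i" using x unfolding mem_obx by blast
    then show "(mm T i \<le> x $ i) = s i" unfolding child_comp mm_def by (cases "s i") auto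
  qed
  ultimately show ?thesis unfolding vstar_def by simp
qed

lemma vs_other:
  assumes T: "T \<in> T0" and T1: "T1 \<in> refine T0" and nc: "\<not> (\<exists>s. T1 = child T s)"
  shows "obx T1 \<inter> obx T = {}" "cbx T1 \<inter> obx T = {}"
proof -
  from T1 obtain T' s' where T': "T' \<in> T0" "T1 = child T' s'" unfolding refine_mem by blast
  have ne: "T' \<noteq> T" using nc T' by blast
  have d: "obx T' \<inter> obx T = {}" using gmeshD(4)[OF T0_gm T'(1) T ne] .
  have nd: "nondeg T'" using gmeshD(2)[OF T0_gm T'(1)] .
  show "obx T1 \<inter> obx T = {}" using d child_obx T'(2) by blast
  have "cbx T' = closure (obx T')"
    using nondeg_ne[OF nd] unfolding obx_def cbx_def by (simp add: closure_box)
  moreover have "obx T \<inter> closure (obx T') = {}"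
    using d open_Int_closure_eq_empty[OF obx_open[of T], of "obx T'"] by blast
  ultimately have "cbx T' \<inter> obx T = {}" by blast
  moreover have "cbx T1 \<subseteq> cbx T'" using child_cbx[OF nd] T'(2) by blast
  ultimately show "cbx T1 \<inter> obx T = {}" by blast
qed

lemma vs_PP:
  assumes T: "T \<in> T0"
  shows "PP (refine T0) (vstar (refine T0) T)"
  unfolding PP_def
proof (intro conjI ballI allI impI)
  fix T1 assume T1: "T1 \<in> refine T0"
  show "\<exists>p\<in>ned_polys. \<forall>x\<in>obx T1. vstar (refine T0) T x = p x"
  proof (cases "\<exists>s. T1 = child T s")
    case True
    then obtain s where s: "T1 = child T s" by blast
    then have "\<forall>x\<in>obx T1. vstar (refine T0) T x = GG T s x" using vs_child[OF T] by blast
    then show ?thesis using GG_ned by blast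
  next
    case False
    have "\<forall>x\<in>obx T1. vstar (refine T0) T x = 0"
      using vs_other(1)[OF T T1 False] unfolding vstar_def by auto
    then show ?thesis using ned_polys_zero by (intro bexI[of _ "\<lambda>x. 0"]) auto
  qed
next
  fix x assume "x \<notin> \<Union>(obx ` refine T0)"
  then show "vstar (refine T0) T x = 0" unfolding vstar_def by simp
qed

lemma vs_loc:
  assumes T: "T \<in> T0" and T1: "T1 \<in> refine T0"
  shows "\<exists>Q G. (\<forall>j x t. Q (x + t *\<^sub>R axis j 1) = Q x + t * G x $ j) \<and>
     (\<forall>y\<in>cbx T1. Q y = Phi T y \<and> loc (vstar (refine T0) T) T1 y = G y)"
proof -
  have ndT: "nondeg T" using gmeshD(2)[OF T0_gm T] .
  have nd1: "nondeg T1" using gmeshD(2)[OF gmk[of 1]] T1 unfolding mesh1 by blast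
  note ls = loc_spec[OF vs_PP[OF T] T1]
  show ?thesis
  proof (cases "\<exists>s. T1 = child T s")
    case True
    then obtain s where s: "T1 = child T s" by blast
    have eq: "\<forall>x\<in>obx T1. loc (vstar (refine T0) T) T1 x = GG T s x" using vs_child[OF T] s ls by auto
    have "\<forall>y\<in>cbx T1. qq T s y = Phi T y \<and> loc (vstar (refine T0) T) T1 y = GG T s y"
    proof
      fix y assume y: "y \<in> cbx T1"
      show "qq T s y = Phi T y \<and> loc (vstar (refine T0) T) T1 y = GG T s y"
        using Phi_child[OF ndT, of y s] y s poly_eq_cbx[OF conjunct1[OF ls] GG_ned nd1 eq y] by simp
    qed
    moreover have "\<forall>j x t. qq T s (x + t *\<^sub>R axis j 1) = qq T s x + t * GG T s x $ j" using qq_line by blast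
    ultimately show ?thesis by blast
  next
    case False
    have z: "\<forall>x\<in>obx T1. vstar (refine T0) T x = 0"
      using vs_other(1)[OF T T1 False] unfolding vstar_def by auto
    have eq: "\<forall>x\<in>obx T1. loc (vstar (refine T0) T) T1 x = (\<lambda>x. 0) x"
      using z ls by auto
    have "\<forall>y\<in>cbx T1. (\<lambda>x. 0::real) y = Phi T y \<and> loc (vstar (refine T0) T) T1 y = (\<lambda>x. 0) y"
    proof
      fix y assume y: "y \<in> cbx T1"
      have "y \<notin> obx T" using vs_other(2)[OF T T1 False] y by blast
      then show "(\<lambda>x. 0::real) y = Phi T y \<and> loc (vstar (refine T0) T) T1 y = (\<lambda>x. 0) y"
        using Phi_out[OF ndT] poly_eq_cbx[OF conjunct1[OF ls] ned_polys_zero nd1 eq y] by simp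
    qed
    moreover have "\<forall>j x t. (\<lambda>x. 0::real) (x + t *\<^sub>R axis j 1) = (\<lambda>x. 0) x + t * (\<lambda>x. 0::real^3) x $ j" by simp
    ultimately show ?thesis by (intro exI[of _ "\<lambda>x. 0::real"] exI[of _ "\<lambda>x. 0::real^3"]) simp
  qed
qed

end



context setting
begin

lemma vs_ned:
  assumes T: "T \<in> T0"
  shows "vstar (refine T0) T \<in> ned lo hi (refine T0)"
  unfolding ned_alt
proof (intro CollectI conjI)
  show "PP (refine T0) (vstar (refine T0) T)" by (rule vs_PP[OF T])
  have gm1: "gmesh lo hi (refine T0)" using gmk[of 1] unfolding mesh1 .
  show "C3 (refine T0) (vstar (refine T0) T)"
    unfolding C3_def
  proof (intro ballI allI impI)
    fix T1 T2 F i x j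
    assume T1: "T1 \<in> refine T0" and T2: "T2 \<in> refine T0"
      and H: "is_face T1 F \<and> is_face T2 F \<and> fdim F = 2 \<and> fst F $ i = snd F $ i"
      and x: "x \<in> cbx F" and j: "j \<noteq> i"
    obtain Q1 G1 where Q1: "\<forall>j x t. Q1 (x + t *\<^sub>R axis j 1) = Q1 x + t * G1 x $ j"
      and Q1c: "\<forall>y\<in>cbx T1. Q1 y = Phi T y \<and> loc (vstar (refine T0) T) T1 y = G1 y"
      using vs_loc[OF T T1] by blast
    obtain Q2 G2 where Q2: "\<forall>j x t. Q2 (x + t *\<^sub>R axis j 1) = Q2 x + t * G2 x $ j"
      and Q2c: "\<forall>y\<in>cbx T2. Q2 y = Phi T y \<and> loc (vstar (refine T0) T) T2 y = G2 y"
      using vs_loc[OF T T2] by blast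
    have nd1: "nondeg T1" and nd2: "nondeg T2" using gmeshD(2)[OF gm1] T1 T2 by auto
    have s1: "cbx F \<subseteq> cbx T1" using is_face_sub[OF nd1] H by blast
    have s2: "cbx F \<subseteq> cbx T2" using is_face_sub[OF nd2] H by blast
    have le: "\<forall>l. fst F $ l \<le> snd F $ l" using is_face_le[OF nd1] H by blast
    have eq: "\<forall>y\<in>cbx F. Q1 y = Q2 y"
    proof
      fix y assume y: "y \<in> cbx F"
      have y1: "y \<in> cbx T1" using s1 y by blast
      have y2: "y \<in> cbx T2" using s2 y by blast
      show "Q1 y = Q2 y" using Q1c y1 Q2c y2 by simp
    qed
    have L1: "\<forall>x t. Q1 (x + t *\<^sub>R axis j 1) = Q1 x + t * G1 x $ j" using Q1 by blast
    have L2: "\<forall>x t. Q2 (x + t *\<^sub>R axis j 1) = Q2 x + t * G2 x $ j" using Q2 by blast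
    have "G1 x $ j = G2 x $ j"
      by (rule tang[OF L1 L2 _ _ j le x eq]) (use H in auto)
    moreover have x1: "x \<in> cbx T1" using s1 x by blast
    moreover have x2: "x \<in> cbx T2" using s2 x by blast
    ultimately show "loc (vstar (refine T0) T) T1 x $ j = loc (vstar (refine T0) T) T2 x $ j"
      using Q1c Q2c by simp
  qed
  show "C4 lo hi (refine T0) (vstar (refine T0) T)"
    unfolding C4_def
  proof (intro ballI allI impI)
    fix T1 F i x j
    assume T1: "T1 \<in> refine T0"
      and H: "is_face T1 F \<and> fdim F = 2 \<and> fst F $ i = snd F $ i \<and> cbx F \<subseteq> frontier (box lo hi)"
      and x: "x \<in> cbx F" and j: "j \<noteq> i"
    obtain Q1 G1 where Q1: "\<forall>j x t. Q1 (x + t *\<^sub>R axis j 1) = Q1 x + t * G1 x $ j"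
      and Q1c: "\<forall>y\<in>cbx T1. Q1 y = Phi T y \<and> loc (vstar (refine T0) T) T1 y = G1 y"
      using vs_loc[OF T T1] by blast
    have nd1: "nondeg T1" using gmeshD(2)[OF gm1] T1 by auto
    have ndT: "nondeg T" using gmeshD(2)[OF T0_gm T] .
    have s1: "cbx F \<subseteq> cbx T1" using is_face_sub[OF nd1] H by blast
    have le: "\<forall>l. fst F $ l \<le> snd F $ l" using is_face_le[OF nd1] H by blast
    have fb: "frontier (box lo hi) \<inter> box lo hi = {}"
      unfolding frontier_def using interior_open[OF open_box] by blast
    have "\<forall>y\<in>cbx F. y \<notin> obx T" using H fb gmeshD(3)[OF T0_gm T] by blast
    then have eq: "\<forall>y\<in>cbx F. Q1 y = (\<lambda>x. 0) y"
    proof (intro ballI)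
      fix y assume n: "\<forall>y\<in>cbx F. y \<notin> obx T" and y: "y \<in> cbx F"
      have y1: "y \<in> cbx T1" using s1 y by blast
      show "Q1 y = (\<lambda>x. 0) y" using Q1c y1 Phi_out[OF ndT] n y by simp
    qed
    have L1: "\<forall>x t. Q1 (x + t *\<^sub>R axis j 1) = Q1 x + t * G1 x $ j" using Q1 by blast
    have L2: "\<forall>x t. (\<lambda>x. 0::real) (x + t *\<^sub>R axis j 1) = (\<lambda>x. 0) x + t * (\<lambda>x. 0::real^3) x $ j" by simp
    have "G1 x $ j = (\<lambda>x. 0::real^3) x $ j"
      by (rule tang[OF L1 L2 _ _ j le x eq]) (use H in auto)
    moreover have x1: "x \<in> cbx T1" using s1 x by blast
    ultimately show "loc (vstar (refine T0) T) T1 x $ j = 0"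
      using Q1c by simp
  qed
qed

lemma C_nonneg:
  assumes sd: "stable_decomp var (\<alpha>, lo, hi, T0) C"
  shows "0 \<le> C"
proof (rule ccontr)
  assume "\<not> 0 \<le> C"
  then have C: "C < 0" by simp
  obtain T where T: "T \<in> T0" using bm unfolding box_mesh_def by blast
  have ndT: "nondeg T" using gmeshD(2)[OF T0_gm T] .
  define vs where "vs = vstar (refine T0) T"
  have vN: "vs \<in> Nk (\<alpha>, lo, hi, T0) 1" unfolding vs_def Nk_eq mesh1 by (rule vs_ned[OF T])
  define R where "R = Ritz (\<alpha>, lo, hi, T0) 1 vs"
  have dz: "vs x - Inj (\<alpha>, lo, hi, T0) 1 R x = 0" for x
    unfolding R_def by (rule d_zero[OF sd C _ vN]) simp
  have "R \<in> Nk (\<alpha>, lo, hi, T0) 0" using Ritz_spec[OF _ vN] unfolding R_def by simp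
  then have "PP T0 R" using Nk_PP[of 0] mesh_0[of T0] by auto
  then obtain p where p: "p \<in> ned_polys" "\<forall>x\<in>obx T. R x = p x" using T unfolding PP_def by blast
  define s0 where "s0 = (\<lambda>i::3. False)"
  define s1 where "s1 = (\<lambda>i::3. i = 1)"
  define x0 :: pt where "x0 = (\<chi> i. (3 * fst T $ i + snd T $ i) / 4)"
  define x1 :: pt where "x1 = (\<chi> i. if i = 1 then (fst T $ i + 3 * snd T $ i) / 4 else (3 * fst T $ i + snd T $ i) / 4)"
  have ab: "fst T $ i < snd T $ i" for i using ndT unfolding nondeg_def by blast
  have x0c: "x0 \<in> obx (child T s0)"
    unfolding mem_obx child_comp x0_def s0_def using ab by auto
  have x1c: "x1 \<in> obx (child T s1)"
    unfolding mem_obx child_comp x1_def s1_def using ab by auto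
  have key: "GG T s x = p x" if xc: "x \<in> obx (child T s)" for x s
  proof -
    have cm: "child T s \<in> mesh T0 1" unfolding mesh1 refine_mem using T by blast
    have "x \<in> \<Union>(obx ` mesh T0 1)" using xc cm by blast
    then have "Inj (\<alpha>, lo, hi, T0) 1 R x = R x" unfolding Inj_eq by simp
    also have "R x = p x" using p(2) xc child_obx by blast
    finally have "Inj (\<alpha>, lo, hi, T0) 1 R x = p x" .
    moreover have "vs x = GG T s x" unfolding vs_def by (rule vs_child[OF T xc])
    ultimately show ?thesis using dz[of x] by simp
  qed
  have e0: "GG T s0 x0 = p x0" by (rule key[OF x0c])
  have e1: "GG T s1 x1 = p x1" by (rule key[OF x1c])
  have "p x0 $ 1 = p x1 $ 1"
  proof -
    from p(1) obtain a b c where "p = ned_poly a b c" unfolding ned_polys_def by blast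
    moreover have "x0 $ 2 = x1 $ 2" "x0 $ 3 = x1 $ 3" unfolding x0_def x1_def by simp_all
    ultimately show ?thesis by (simp add: ned_poly_comp)
  qed
  then have eqG: "GG T s0 x0 $ 1 = GG T s1 x1 $ 1" using e0 e1 by simp
  have h: "0 < hh T i" for i by (rule hh_pos[OF ndT])
  have ellF: "ell T (\<lambda>_. False) i t = (t - fst T $ i) / hh T i" for i t
    by (simp add: ell_def ea_def dl_def diff_divide_distrib)
  have dx: "(3 * fst T $ i + snd T $ i) / 4 - fst T $ i = hh T i / 2" for i
    by (simp add: hh_def field_simps)
  have l0: "ell T s0 i (x0 $ i) = 1/2" for i
  proof -
    have "ell T s0 i (x0 $ i) = hh T i / 2 / hh T i" unfolding s0_def ellF x0_def using dx[of i] by simp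
    then show ?thesis using h[of i] by simp
  qed
  have l1: "ell T s1 i (x1 $ i) = 1/2" if "i \<noteq> 1" for i
  proof -
    have "ell T s1 i (x1 $ i) = ell T (\<lambda>_. False) i ((3 * fst T $ i + snd T $ i) / 4)"
      unfolding s1_def x1_def ell_def ea_def dl_def using that by simp
    also have "\<dots> = hh T i / 2 / hh T i" unfolding ellF using dx[of i] by simp
    finally show ?thesis using h[of i] by simp
  qed
  have l12: "ell T s1 2 (x1 $ 2) = 1/2" by (rule l1) simp
  have l13: "ell T s1 3 (x1 $ 3) = 1/2" by (rule l1) simp
  have g0: "GG T s0 x0 $ 1 = dl T s0 1 * (1/2) * (1/2)"
    unfolding GG_def vector_3(1) l0 by (rule refl)
  have g1: "GG T s1 x1 $ 1 = dl T s1 1 * (1/2) * (1/2)"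
    unfolding GG_def vector_3(1) l12 l13 by (rule refl)
  have d0: "dl T s0 1 = 1 / hh T 1" by (simp add: dl_def s0_def)
  have d1: "dl T s1 1 = - 1 / hh T 1" by (simp add: dl_def s1_def)
  show False using eqG g0 g1 d0 d1 h[of 1] by (simp add: field_simps)
qed

lemma final:
  assumes eta: "0 < \<eta>" and sd: "stable_decomp var (\<alpha>, lo, hi, T0) C"
    and k: "k \<ge> 1" and v: "v \<in> Nk (\<alpha>, lo, hi, T0) k"
  shows "(let st = (\<alpha>, lo, hi, T0);
              d = (\<lambda>x. v x - Inj st k (Ritz st k v) x);
              IdR = (\<lambda>x. v x - Rk var \<eta> st k v x)
          in ak st d d \<le> (C / \<eta>) * ak st IdR v)"
  unfolding Let_def ak_eq
  using main_core[OF k v eta sd C_nonneg[OF sd]] .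

end



theorem lemma4p9:
  fixes \<alpha> :: real and lo hi :: "real^3" and T0 :: "bx set"
    and var :: variant and \<eta> C :: real
  assumes "\<alpha> > 0"
    and "\<forall>i. lo $ i < hi $ i"
    and "box_mesh lo hi T0"
    and "0 < \<eta>" and "\<eta> \<le> eta_max var"
    and "stable_decomp var (\<alpha>, lo, hi, T0) C"
    and "k \<ge> 1"
    and "v \<in> Nk (\<alpha>, lo, hi, T0) k"
  shows "(let st = (\<alpha>, lo, hi, T0);
              d = (\<lambda>x. v x - Inj st k (Ritz st k v) x);
              IdR = (\<lambda>x. v x - Rk var \<eta> st k v x)
          in ak st d d \<le> (C / \<eta>) * ak st IdR v)"
proof -
  interpret setting \<alpha> lo hi T0 using assms(1) assms(3) by unfold_locales
  show ?thesis by (rule final[OF assms(4) assms(6) assms(7) assms(8)])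
qed

end
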